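(* Let $a>b>0$ and let $E$ be the ellipse $\frac{x^2}{a^2}+\frac{y^2}{b^2}=1$. Over the family of 3-periodic billiard orbits $T=P_1P_2P_3$ in $E$, the following three quantities are constant (independent of the orbit): (i) the sum $\cos\theta_1+\cos\theta_2+\cos\theta_3$ of the cosines of the interior angles $\theta_i$ of $T$; (ii) the product $|\cos\theta_1'\cos\theta_2'\cos\theta_3'|$ of the cosines of the interior angles $\theta_i'$ of the excentral triangle $T'$ of $T$; (iii) the ratio $A'/A$ of the area $A'$ of the excentral triangle $T'$ to the area $A$ of $T$.
   Context: A 3-periodic billiard orbit in the ellipse $E$ is a nondegenerate triangle $P_1P_2P_3$ with all vertices on $E$ such that at each vertex $P_i$ the normal line to $E$ at $P_i$ bisects the interior angle of the triangle at $P_i$. These orbits form a one-parameter family. The excentral triangle of a triangle is the triangle whose vertices are its three excenters (the intersections of pairs of exterior angle bisectors). *)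

theory Defs
  imports Complex_Main
begin

type_synonym pt = "real \<times> real"

definition vsub :: "pt \<Rightarrow> pt \<Rightarrow> pt" where
  "vsub P Q = (fst P - fst Q, snd P - snd Q)"

definition dot :: "pt \<Rightarrow> pt \<Rightarrow> real" where
  "dot u v = fst u * fst v + snd u * snd v"

definition cross :: "pt \<Rightarrow> pt \<Rightarrow> real" where
  "cross u v = fst u * snd v - snd u * fst v"

definition vlen :: "pt \<Rightarrow> real" where
  "vlen u = sqrt (dot u u)"

definition vscale :: "real \<Rightarrow> pt \<Rightarrow> pt" where
  "vscale c u = (c * fst u, c * snd u)"

definition vadd :: "pt \<Rightarrow> pt \<Rightarrow> pt" where
  "vadd u v = (fst u + fst v, snd u + snd v)"

definition unit_dir :: "pt \<Rightarrow> pt \<Rightarrow> pt" where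
  "unit_dir P Q = vscale (1 / vlen (vsub Q P)) (vsub Q P)"

definition on_ellipse :: "real \<Rightarrow> real \<Rightarrow> pt \<Rightarrow> bool" where
  "on_ellipse a b P \<longleftrightarrow> (fst P)\<^sup>2 / a\<^sup>2 + (snd P)\<^sup>2 / b\<^sup>2 = 1"

text \<open>Normal direction of the ellipse at P (gradient of the defining function, up to factor 2).\<close>
definition ellipse_normal :: "real \<Rightarrow> real \<Rightarrow> pt \<Rightarrow> pt" where
  "ellipse_normal a b P = (fst P / a\<^sup>2, snd P / b\<^sup>2)"

definition nondegenerate :: "pt \<Rightarrow> pt \<Rightarrow> pt \<Rightarrow> bool" where
  "nondegenerate A B C \<longleftrightarrow> cross (vsub B A) (vsub C A) \<noteq> 0"

definition int_bisector_dir :: "pt \<Rightarrow> pt \<Rightarrow> pt \<Rightarrow> pt" where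
  "int_bisector_dir A B C = vadd (unit_dir A B) (unit_dir A C)"

definition ext_bisector_dir :: "pt \<Rightarrow> pt \<Rightarrow> pt \<Rightarrow> pt" where
  "ext_bisector_dir A B C = vsub (unit_dir A B) (unit_dir A C)"

definition on_line :: "pt \<Rightarrow> pt \<Rightarrow> pt \<Rightarrow> bool" where
  "on_line A d X \<longleftrightarrow> cross (vsub X A) d = 0"

text \<open>The normal line to E at A (through A, direction the normal) bisects the interior angle at A:
  it coincides with the internal bisector line, i.e. the directions are parallel.\<close>
definition normal_bisects :: "real \<Rightarrow> real \<Rightarrow> pt \<Rightarrow> pt \<Rightarrow> pt \<Rightarrow> bool" where
  "normal_bisects a b A B C \<longleftrightarrow> cross (ellipse_normal a b A) (int_bisector_dir A B C) = 0"

definition billiard3 :: "real \<Rightarrow> real \<Rightarrow> pt \<Rightarrow> pt \<Rightarrow> pt \<Rightarrow> bool" where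
  "billiard3 a b P1 P2 P3 \<longleftrightarrow>
     nondegenerate P1 P2 P3 \<and>
     on_ellipse a b P1 \<and> on_ellipse a b P2 \<and> on_ellipse a b P3 \<and>
     normal_bisects a b P1 P2 P3 \<and> normal_bisects a b P2 P3 P1 \<and> normal_bisects a b P3 P1 P2"

definition interior_angle :: "pt \<Rightarrow> pt \<Rightarrow> pt \<Rightarrow> real" where
  "interior_angle A B C =
     arccos (dot (vsub B A) (vsub C A) / (vlen (vsub B A) * vlen (vsub C A)))"

text \<open>Excenter opposite vertex A: the intersection of the exterior angle bisectors at B and C.\<close>
definition excenter :: "pt \<Rightarrow> pt \<Rightarrow> pt \<Rightarrow> pt" where
  "excenter A B C = (THE X. on_line B (ext_bisector_dir B C A) X \<and> on_line C (ext_bisector_dir C A B) X)"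

definition tri_area :: "pt \<Rightarrow> pt \<Rightarrow> pt \<Rightarrow> real" where
  "tri_area A B C = \<bar>cross (vsub B A) (vsub C A)\<bar> / 2"

end

theory Submission
  imports Defs
begin


lemma vsub_pair[simp]: "vsub (a,b) (c,d) = (a-c, b-d)" by (simp add: vsub_def)
lemma dot_pair[simp]: "dot (a,b) (c,d) = a*c + b*d" by (simp add: dot_def)
lemma cross_pair[simp]: "cross (a,b) (c,d) = a*d - b*c" by (simp add: cross_def)
lemma vscale_pair[simp]: "vscale k (a,b) = (k*a, k*b)" by (simp add: vscale_def)
lemma vadd_pair[simp]: "vadd (a,b) (c,d) = (a+c, b+d)" by (simp add: vadd_def)

lemma dot_self_nonneg: "dot u u \<ge> 0" unfolding dot_def by simp
lemma vlen_sq: "(vlen u)^2 = dot u u"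
  unfolding vlen_def using dot_self_nonneg by simp
lemma vlen_nonneg: "vlen u \<ge> 0" unfolding vlen_def using dot_self_nonneg by simp
lemma vlen_sym: "vlen (vsub P Q) = vlen (vsub Q P)"
  unfolding vlen_def dot_def vsub_def by (simp add: algebra_simps)

lemma dot_cs: "\<bar>dot u v\<bar> \<le> vlen u * vlen v"
proof -
  have "(dot u v)^2 \<le> dot u u * dot v v"
  proof -
    have "dot u u * dot v v - (dot u v)^2 = (cross u v)^2"
      unfolding dot_def cross_def by algebra
    thus ?thesis by (metis diff_ge_0_iff_ge zero_le_power2)
  qed
  hence "sqrt ((dot u v)^2) \<le> sqrt (dot u u * dot v v)" by (rule real_sqrt_le_mono)
  thus ?thesis unfolding vlen_def by (simp add: real_sqrt_mult)
qed

lemma cos_interior: "cos (interior_angle A B C) =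
   dot (vsub B A) (vsub C A) / (vlen (vsub B A) * vlen (vsub C A))"
proof -
  let ?q = "dot (vsub B A) (vsub C A) / (vlen (vsub B A) * vlen (vsub C A))"
  have "\<bar>?q\<bar> \<le> 1"
  proof (cases "vlen (vsub B A) * vlen (vsub C A) = 0")
    case True thus ?thesis by auto
  next
    case False
    hence pos: "vlen (vsub B A) * vlen (vsub C A) > 0" using vlen_nonneg
      by (metis less_eq_real_def mult_nonneg_nonneg)
    have "\<bar>?q\<bar> = \<bar>dot (vsub B A) (vsub C A)\<bar> / (vlen (vsub B A) * vlen (vsub C A))"
      using pos by (simp add: abs_divide)
    also have "\<dots> \<le> 1" using dot_cs pos by (simp add: divide_le_eq_1)
    finally show ?thesis .
  qed
  thus ?thesis unfolding interior_angle_def by (simp add: cos_arccos_abs)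
qed



lemma cross_zero_unique:
  fixes p q w1 w2 v1 v2 :: real
  assumes "p*w2 - q*w1 = 0" "p*v2 - q*v1 = 0" "w1*v2 - w2*v1 \<noteq> 0"
  shows "p = 0 \<and> q = 0"
proof -
  have "p*(w1*v2 - w2*v1) = 0" using assms(1,2) by algebra
  moreover have "q*(w1*v2 - w2*v1) = 0" using assms(1,2) by algebra
  ultimately show ?thesis using assms(3) by simp
qed

lemma excenter_explicit:
  fixes x1 y1 x2 y2 x3 y3 la lb lc :: real
  assumes la: "la = vlen (vsub (x3,y3) (x2,y2))"
    and lb: "lb = vlen (vsub (x1,y1) (x3,y3))"
    and lc: "lc = vlen (vsub (x2,y2) (x1,y1))"
    and pos: "la > 0" "lb > 0" "lc > 0" "lb + lc - la > 0"
    and nd: "(x2-x1)*(y3-y1) - (y2-y1)*(x3-x1) \<noteq> 0"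
  shows "excenter (x1,y1) (x2,y2) (x3,y3) =
     ((-la*x1+lb*x2+lc*x3)/(lb+lc-la), (-la*y1+lb*y2+lc*y3)/(lb+lc-la))"
proof -
  define Da where "Da = lb + lc - la"
  have lc': "vlen (vsub (x1,y1) (x2,y2)) = lc" using lc vlen_sym by metis
  have la': "vlen (vsub (x2,y2) (x3,y3)) = la" using la vlen_sym by metis
  have w2: "ext_bisector_dir (x2,y2) (x3,y3) (x1,y1) =
      ((x3-x2)/la - (x1-x2)/lc, (y3-y2)/la - (y1-y2)/lc)"
    unfolding ext_bisector_dir_def unit_dir_def using la lc' by (simp add: algebra_simps)
  have w3: "ext_bisector_dir (x3,y3) (x1,y1) (x2,y2) =
      ((x1-x3)/lb - (x2-x3)/la, (y1-y3)/lb - (y2-y3)/la)"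
    unfolding ext_bisector_dir_def unit_dir_def using lb la' by (simp add: algebra_simps)
  define E where "E = ((-la*x1+lb*x2+lc*x3)/Da, (-la*y1+lb*y2+lc*y3)/Da)"
  have DaP: "Da > 0" using pos Da_def by simp
  let ?w2x = "(x3-x2)/la - (x1-x2)/lc" and ?w2y = "(y3-y2)/la - (y1-y2)/lc"
  let ?w3x = "(x1-x3)/lb - (x2-x3)/la" and ?w3y = "(y1-y3)/lb - (y2-y3)/la"
  have E1: "(fst E - x2) * ?w2y - (snd E - y2) * ?w2x = 0"
    unfolding E_def Da_def using pos by (simp add: field_simps; algebra?)
  have E2: "(fst E - x3) * ?w3y - (snd E - y3) * ?w3x = 0"
    unfolding E_def Da_def using pos by (simp add: field_simps; algebra?)
  have cw: "?w2x * ?w3y - ?w2y * ?w3x \<noteq> 0"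
  proof -
    have "?w2x * ?w3y - ?w2y * ?w3x = ((x2-x1)*(y3-y1) - (y2-y1)*(x3-x1)) * Da / (la*lb*lc)"
      unfolding Da_def using pos by (simp add: field_simps; algebra?)
    thus ?thesis using pos nd DaP by simp
  qed
  have onl: "\<And>X. on_line (x2,y2) (ext_bisector_dir (x2,y2) (x3,y3) (x1,y1)) X \<and>
      on_line (x3,y3) (ext_bisector_dir (x3,y3) (x1,y1) (x2,y2)) X \<longleftrightarrow>
      (fst X - x2) * ?w2y - (snd X - y2) * ?w2x = 0 \<and> (fst X - x3) * ?w3y - (snd X - y3) * ?w3x = 0"
    unfolding on_line_def w2 w3 by (simp add: vsub_def cross_def)
  have "excenter (x1,y1) (x2,y2) (x3,y3) = E"
    unfolding excenter_def
  proof (rule the_equality)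
    show "on_line (x2,y2) (ext_bisector_dir (x2,y2) (x3,y3) (x1,y1)) E \<and>
      on_line (x3,y3) (ext_bisector_dir (x3,y3) (x1,y1) (x2,y2)) E" using onl E1 E2 by simp
  next
    fix X assume "on_line (x2,y2) (ext_bisector_dir (x2,y2) (x3,y3) (x1,y1)) X \<and>
      on_line (x3,y3) (ext_bisector_dir (x3,y3) (x1,y1) (x2,y2)) X"
    hence X1: "(fst X - x2) * ?w2y - (snd X - y2) * ?w2x = 0" and
          X2: "(fst X - x3) * ?w3y - (snd X - y3) * ?w3x = 0" using onl by auto
    have a1: "(fst X - fst E) * ?w2y - (snd X - snd E) * ?w2x = 0" using X1 E1 by algebra
    have a2: "(fst X - fst E) * ?w3y - (snd X - snd E) * ?w3x = 0" using X2 E2 by algebra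
    have "fst X - fst E = 0 \<and> snd X - snd E = 0"
      by (rule cross_zero_unique[OF a1 a2 cw])
    thus "X = E" by (simp add: prod_eq_iff)
  qed
  thus ?thesis unfolding E_def Da_def .
qed



lemma len_pos:
  fixes x1 y1 x2 y2 :: real
  assumes "(x1,y1) \<noteq> (x2,y2)"
  shows "vlen (vsub (x1,y1) (x2,y2)) > 0"
    and "(vlen (vsub (x1,y1) (x2,y2)))^2 = (x1-x2)^2 + (y1-y2)^2"
proof -
  show sq: "(vlen (vsub (x1,y1) (x2,y2)))^2 = (x1-x2)^2 + (y1-y2)^2"
    using vlen_sq by (simp add: power2_eq_square)
  have "(x1-x2)^2 + (y1-y2)^2 \<noteq> 0" using assms by auto
  hence "vlen (vsub (x1,y1) (x2,y2)) \<noteq> 0" using sq by auto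
  thus "vlen (vsub (x1,y1) (x2,y2)) > 0" using vlen_nonneg by (simp add: order_less_le)
qed

lemma prod_helper:
  fixes k1 k2 k3 l1 l2 l3 D1 D2 D3 :: real
  assumes "k1>0" "k2>0" "k3>0" "l1>0" "l2>0" "l3>0" "D1>0" "D2>0" "D3>0"
  shows "(k3*k2*l1*(D1*D2*D3)/2) * (k1*k3*l2*(D1*D2*D3)/2) * (k2*k1*l3*(D1*D2*D3)/2) /
     ((k3^2*(l1*l2*D1*D2)) * (k2^2*(l3*l1*D3*D1)) * (k1^2*(l2*l3*D2*D3))) = D1*D2*D3/(2*l1*l2*l3)/4"
proof -
  have num: "(k3*k2*l1*(D1*D2*D3)/2) * (k1*k3*l2*(D1*D2*D3)/2) * (k2*k1*l3*(D1*D2*D3)/2)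
     = ((k1*k2*k3)^2*(l1*l2*l3)*(D1*D2*D3)^2) * ((D1*D2*D3)/8)" by (simp add: field_simps power2_eq_square)
  have den: "(k3^2*(l1*l2*D1*D2)) * (k2^2*(l3*l1*D3*D1)) * (k1^2*(l2*l3*D2*D3))
     = ((k1*k2*k3)^2*(l1*l2*l3)*(D1*D2*D3)^2) * (l1*l2*l3)" by algebra
  have nz: "(k1*k2*k3)^2*(l1*l2*l3)*(D1*D2*D3)^2 \<noteq> 0" using assms by simp
  show ?thesis unfolding num den using nz by (simp add: field_simps)
qed

lemma area_helper:
  fixes l1 l2 l3 D1 D2 D3 Dl :: real
  assumes "l1>0" "l2>0" "l3>0" "D1>0" "D2>0" "D3>0" "Dl \<noteq> 0"
  shows "\<bar>-((2*l3/(D1*D2))*(2*l2/(D3*D1))) * (-l1*Dl*D1)\<bar> / 2 / (\<bar>Dl\<bar>/2) = 2 / (D1*D2*D3/(2*l1*l2*l3))"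
proof -
  have "-((2*l3/(D1*D2))*(2*l2/(D3*D1))) * (-l1*Dl*D1) = Dl * (4*l1*l2*l3/(D1*D2*D3))"
    using assms by (simp add: field_simps)
  moreover have "4*l1*l2*l3/(D1*D2*D3) > 0" using assms by simp
  ultimately have "\<bar>-((2*l3/(D1*D2))*(2*l2/(D3*D1))) * (-l1*Dl*D1)\<bar> = \<bar>Dl\<bar> * (4*l1*l2*l3/(D1*D2*D3))"
    by (metis abs_mult abs_of_pos)
  thus ?thesis using assms by (simp add: field_simps)
qed

lemma triG:
  fixes x1 y1 x2 y2 x3 y3 :: real
  assumes nd: "(x2-x1)*(y3-y1) - (y2-y1)*(x3-x1) \<noteq> 0"
  defines "l1 \<equiv> vlen (vsub (x3,y3) (x2,y2))"
    and "l2 \<equiv> vlen (vsub (x1,y1) (x3,y3))"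
    and "l3 \<equiv> vlen (vsub (x2,y2) (x1,y1))"
  defines "rho \<equiv> (l2+l3-l1)*(l3+l1-l2)*(l1+l2-l3)/(2*l1*l2*l3)"
  shows "cos (interior_angle (x1,y1) (x2,y2) (x3,y3)) + cos (interior_angle (x2,y2) (x3,y3) (x1,y1))
          + cos (interior_angle (x3,y3) (x1,y1) (x2,y2)) = 1 + rho"
    and "\<bar>cos (interior_angle (excenter (x1,y1) (x2,y2) (x3,y3)) (excenter (x2,y2) (x3,y3) (x1,y1)) (excenter (x3,y3) (x1,y1) (x2,y2)))
         * cos (interior_angle (excenter (x2,y2) (x3,y3) (x1,y1)) (excenter (x3,y3) (x1,y1) (x2,y2)) (excenter (x1,y1) (x2,y2) (x3,y3)))
         * cos (interior_angle (excenter (x3,y3) (x1,y1) (x2,y2)) (excenter (x1,y1) (x2,y2) (x3,y3)) (excenter (x2,y2) (x3,y3) (x1,y1)))\<bar>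
         = rho / 4"
    and "tri_area (excenter (x1,y1) (x2,y2) (x3,y3)) (excenter (x2,y2) (x3,y3) (x1,y1)) (excenter (x3,y3) (x1,y1) (x2,y2))
         / tri_area (x1,y1) (x2,y2) (x3,y3) = 2 / rho"
proof -
  define Dl where "Dl = (x2-x1)*(y3-y1) - (y2-y1)*(x3-x1)"
  have ne32: "(x3,y3) \<noteq> (x2,y2)" using nd by auto
  have ne13: "(x1,y1) \<noteq> (x3,y3)" using nd by auto
  have ne21: "(x2,y2) \<noteq> (x1,y1)" using nd by auto
  have l1p: "l1 > 0" and s1: "l1^2 = (x3-x2)^2 + (y3-y2)^2" using len_pos[OF ne32] l1_def by auto
  have l2p: "l2 > 0" and s2: "l2^2 = (x1-x3)^2 + (y1-y3)^2" using len_pos[OF ne13] l2_def by auto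
  have l3p: "l3 > 0" and s3: "l3^2 = (x2-x1)^2 + (y2-y1)^2" using len_pos[OF ne21] l3_def by auto
  define D1 where "D1 = l2+l3-l1"
  define D2 where "D2 = l3+l1-l2"
  define D3 where "D3 = l1+l2-l3"
  have heron: "(l1+l2+l3)*D1*D2*D3 = 4*Dl^2"
    unfolding D1_def D2_def D3_def Dl_def using s1 s2 s3 by algebra
  have "Dl^2 > 0" using nd Dl_def by simp
  hence pr: "D1*D2*D3 > 0" using heron l1p l2p l3p
    by (metis add_pos_pos mult.assoc zero_less_mult_pos zero_less_numeral mult_pos_pos)
  have D1p: "D1 > 0" and D2p: "D2 > 0" and D3p: "D3 > 0"
  proof -
    have "D1 + D2 > 0" "D2 + D3 > 0" "D1 + D3 > 0" using l1p l2p l3p D1_def D2_def D3_def by auto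
    thus "D1 > 0" "D2 > 0" "D3 > 0" using pr
      by (smt (verit) mult_nonneg_nonpos mult_nonpos_nonneg mult_nonneg_nonneg mult_nonpos_nonpos)+
  qed
  have rho_eq: "rho = D1*D2*D3/(2*l1*l2*l3)" unfolding rho_def D1_def D2_def D3_def by simp
  have l1': "vlen (vsub (x2,y2) (x3,y3)) = l1" using l1_def vlen_sym by metis
  have l2': "vlen (vsub (x3,y3) (x1,y1)) = l2" using l2_def vlen_sym by metis
  have l3': "vlen (vsub (x1,y1) (x2,y2)) = l3" using l3_def vlen_sym by metis
  have c1: "cos (interior_angle (x1,y1) (x2,y2) (x3,y3)) = ((x2-x1)*(x3-x1)+(y2-y1)*(y3-y1))/(l3*l2)"
    unfolding cos_interior using l3_def l2' by simp
  have c2: "cos (interior_angle (x2,y2) (x3,y3) (x1,y1)) = ((x3-x2)*(x1-x2)+(y3-y2)*(y1-y2))/(l1*l3)"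
    unfolding cos_interior using l1_def l3' by simp
  have c3: "cos (interior_angle (x3,y3) (x1,y1) (x2,y2)) = ((x1-x3)*(x2-x3)+(y1-y3)*(y2-y3))/(l2*l1)"
    unfolding cos_interior using l2_def l1' by simp
  have d1: "(x2-x1)*(x3-x1)+(y2-y1)*(y3-y1) = (l3^2+l2^2-l1^2)/2" using s1 s2 s3 by algebra
  have d2: "(x3-x2)*(x1-x2)+(y3-y2)*(y1-y2) = (l1^2+l3^2-l2^2)/2" using s1 s2 s3 by algebra
  have d3: "(x1-x3)*(x2-x3)+(y1-y3)*(y2-y3) = (l2^2+l1^2-l3^2)/2" using s1 s2 s3 by algebra
  show "cos (interior_angle (x1,y1) (x2,y2) (x3,y3)) + cos (interior_angle (x2,y2) (x3,y3) (x1,y1))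
          + cos (interior_angle (x3,y3) (x1,y1) (x2,y2)) = 1 + rho"
    unfolding c1 c2 c3 d1 d2 d3 rho_eq D1_def D2_def D3_def using l1p l2p l3p
    by (simp add: field_simps) algebra

  have l1e: "l1 = vlen (vsub (x3,y3) (x2,y2))" by (simp add: l1_def)
  have l2e: "l2 = vlen (vsub (x1,y1) (x3,y3))" by (simp add: l2_def)
  have l3e: "l3 = vlen (vsub (x2,y2) (x1,y1))" by (simp add: l3_def)
  have ndc2: "(x3-x2)*(y1-y2) - (y3-y2)*(x1-x2) \<noteq> 0" using nd by (simp add: algebra_simps)
  have ndc3: "(x1-x3)*(y2-y3) - (y1-y3)*(x2-x3) \<noteq> 0" using nd by (simp add: algebra_simps)
  have J1: "excenter (x1,y1) (x2,y2) (x3,y3) = ((-l1*x1+l2*x2+l3*x3)/D1, (-l1*y1+l2*y2+l3*y3)/D1)"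
    using excenter_explicit[OF l1e l2e l3e l1p l2p l3p _ nd] D1p D1_def by simp
  have J2: "excenter (x2,y2) (x3,y3) (x1,y1) = ((-l2*x2+l3*x3+l1*x1)/D2, (-l2*y2+l3*y3+l1*y1)/D2)"
    using excenter_explicit[OF l2e l3e l1e l2p l3p l1p _ ndc2] D2p D2_def by simp
  have J3: "excenter (x3,y3) (x1,y1) (x2,y2) = ((-l3*x3+l1*x1+l2*x2)/D3, (-l3*y3+l1*y1+l2*y2)/D3)"
    using excenter_explicit[OF l3e l1e l2e l3p l1p l2p _ ndc3] D3p D3_def by simp
  define k1 where "k1 = 2*l1/(D2*D3)"
  define k2 where "k2 = 2*l2/(D3*D1)"
  define k3 where "k3 = 2*l3/(D1*D2)"
  define W1x where "W1x = l2*(x2-x1) - l3*(x3-x1)"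
  define W1y where "W1y = l2*(y2-y1) - l3*(y3-y1)"
  define W2x where "W2x = l3*(x3-x2) - l1*(x1-x2)"
  define W2y where "W2y = l3*(y3-y2) - l1*(y1-y2)"
  define W3x where "W3x = l1*(x1-x3) - l2*(x2-x3)"
  define W3y where "W3y = l1*(y1-y3) - l2*(y2-y3)"
  let ?J1 = "excenter (x1,y1) (x2,y2) (x3,y3)"
  let ?J2 = "excenter (x2,y2) (x3,y3) (x1,y1)"
  let ?J3 = "excenter (x3,y3) (x1,y1) (x2,y2)"
  have v21: "vsub ?J2 ?J1 = (k3*W3x, k3*W3y)"
    unfolding J1 J2 k3_def W3x_def W3y_def using D1p D2p unfolding D1_def D2_def
    by (simp add: field_simps; algebra?)
  have v32: "vsub ?J3 ?J2 = (k1*W1x, k1*W1y)"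
    unfolding J3 J2 k1_def W1x_def W1y_def using D3p D2p unfolding D3_def D2_def
    by (simp add: field_simps; algebra?)
  have v13: "vsub ?J1 ?J3 = (k2*W2x, k2*W2y)"
    unfolding J1 J3 k2_def W2x_def W2y_def using D1p D3p unfolding D1_def D3_def
    by (simp add: field_simps; algebra?)
  have v12: "vsub ?J1 ?J2 = (-(k3*W3x), -(k3*W3y))" using v21 unfolding vsub_def by (simp add: prod_eq_iff)
  have v23: "vsub ?J2 ?J3 = (-(k1*W1x), -(k1*W1y))" using v32 unfolding vsub_def by (simp add: prod_eq_iff)
  have v31: "vsub ?J3 ?J1 = (-(k2*W2x), -(k2*W2y))" using v13 unfolding vsub_def by (simp add: prod_eq_iff)
  have DDD: "D1*D2*D3 = l1*(l2^2+l3^2-l1^2) + l2*(l3^2+l1^2-l2^2) + l3*(l1^2+l2^2-l3^2) - 2*l1*l2*l3"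
    unfolding D1_def D2_def D3_def by algebra
  have n3: "W3x^2 + W3y^2 = l1*l2*D1*D2"
    unfolding W3x_def W3y_def D1_def D2_def using s1 s2 s3 by algebra
  have n1: "W1x^2 + W1y^2 = l2*l3*D2*D3"
    unfolding W1x_def W1y_def D3_def D2_def using s1 s2 s3 by algebra
  have n2: "W2x^2 + W2y^2 = l3*l1*D3*D1"
    unfolding W2x_def W2y_def D1_def D3_def using s1 s2 s3 by algebra
  have p32: "W3x*W2x + W3y*W2y = -l1*(D1*D2*D3)/2"
    unfolding DDD W3x_def W3y_def W2x_def W2y_def using s1 s2 s3 by algebra
  have p13: "W1x*W3x + W1y*W3y = -l2*(D1*D2*D3)/2"
    unfolding DDD W3x_def W3y_def W1x_def W1y_def using s1 s2 s3 by algebra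
  have p21: "W2x*W1x + W2y*W1y = -l3*(D1*D2*D3)/2"
    unfolding DDD W1x_def W1y_def W2x_def W2y_def using s1 s2 s3 by algebra
  have cr: "W3x*W2y - W3y*W2x = -l1*Dl*D1"
    unfolding Dl_def W3x_def W3y_def W2x_def W2y_def D1_def by algebra

  have k1p: "k1 > 0" unfolding k1_def using l1p D2p D3p by simp
  have k2p: "k2 > 0" unfolding k2_def using l2p D1p D3p by simp
  have k3p: "k3 > 0" unfolding k3_def using l3p D1p D2p by simp
  define L21 where "L21 = vlen (vsub ?J2 ?J1)"
  define L31 where "L31 = vlen (vsub ?J3 ?J1)"
  define L32 where "L32 = vlen (vsub ?J3 ?J2)"
  have L12: "vlen (vsub ?J1 ?J2) = L21" using L21_def vlen_sym by metis
  have L13: "vlen (vsub ?J1 ?J3) = L31" using L31_def vlen_sym by metis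
  have L23: "vlen (vsub ?J2 ?J3) = L32" using L32_def vlen_sym by metis
  have L21s: "L21^2 = k3^2*(l1*l2*D1*D2)"
  proof -
    have "L21^2 = (k3*W3x)*(k3*W3x) + (k3*W3y)*(k3*W3y)" unfolding L21_def vlen_sq v21 by simp
    also have "\<dots> = k3^2*(W3x^2+W3y^2)" by (simp add: power2_eq_square algebra_simps)
    finally show ?thesis using n3 by simp
  qed
  have L31s: "L31^2 = k2^2*(l3*l1*D3*D1)"
  proof -
    have "L31^2 = (-(k2*W2x))*(-(k2*W2x)) + (-(k2*W2y))*(-(k2*W2y))" unfolding L31_def vlen_sq v31 by simp
    also have "\<dots> = k2^2*(W2x^2+W2y^2)" by (simp add: power2_eq_square algebra_simps)
    finally show ?thesis using n2 by simp
  qed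
  have L32s: "L32^2 = k1^2*(l2*l3*D2*D3)"
  proof -
    have "L32^2 = (k1*W1x)*(k1*W1x) + (k1*W1y)*(k1*W1y)" unfolding L32_def vlen_sq v32 by simp
    also have "\<dots> = k1^2*(W1x^2+W1y^2)" by (simp add: power2_eq_square algebra_simps)
    finally show ?thesis using n1 by simp
  qed
  have e1: "dot (vsub ?J2 ?J1) (vsub ?J3 ?J1) = k3*k2*l1*(D1*D2*D3)/2"
  proof -
    have "dot (vsub ?J2 ?J1) (vsub ?J3 ?J1) = -(k3*k2)*(W3x*W2x + W3y*W2y)" unfolding v21 v31 dot_pair by algebra
    thus ?thesis unfolding p32 by simp
  qed
  have e2: "dot (vsub ?J3 ?J2) (vsub ?J1 ?J2) = k1*k3*l2*(D1*D2*D3)/2"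
  proof -
    have "dot (vsub ?J3 ?J2) (vsub ?J1 ?J2) = -(k1*k3)*(W1x*W3x + W1y*W3y)" unfolding v32 v12 dot_pair by algebra
    thus ?thesis unfolding p13 by simp
  qed
  have e3: "dot (vsub ?J1 ?J3) (vsub ?J2 ?J3) = k2*k1*l3*(D1*D2*D3)/2"
  proof -
    have "dot (vsub ?J1 ?J3) (vsub ?J2 ?J3) = -(k2*k1)*(W2x*W1x + W2y*W1y)" unfolding v13 v23 dot_pair by algebra
    thus ?thesis unfolding p21 by simp
  qed
  have "cos (interior_angle ?J1 ?J2 ?J3) * cos (interior_angle ?J2 ?J3 ?J1) * cos (interior_angle ?J3 ?J1 ?J2)
      = (k3*k2*l1*(D1*D2*D3)/2) * (k1*k3*l2*(D1*D2*D3)/2) * (k2*k1*l3*(D1*D2*D3)/2) / (L21^2 * L31^2 * L32^2)"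
    unfolding cos_interior e1 e2 e3 L21_def[symmetric] L31_def[symmetric] L32_def[symmetric] L12 L13 L23
    by (simp add: power2_eq_square)
  also have "\<dots> = rho/4"
    unfolding L21s L31s L32s rho_eq using prod_helper[OF k1p k2p k3p l1p l2p l3p D1p D2p D3p] .
  finally have cp: "cos (interior_angle ?J1 ?J2 ?J3) * cos (interior_angle ?J2 ?J3 ?J1) * cos (interior_angle ?J3 ?J1 ?J2) = rho/4" .
  have rhop: "rho > 0" unfolding rho_eq using pr l1p l2p l3p by simp
  show "\<bar>cos (interior_angle ?J1 ?J2 ?J3) * cos (interior_angle ?J2 ?J3 ?J1) * cos (interior_angle ?J3 ?J1 ?J2)\<bar> = rho/4"
    using cp rhop by simp
  have crJ: "cross (vsub ?J2 ?J1) (vsub ?J3 ?J1) = -(k3*k2)*(W3x*W2y - W3y*W2x)"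
    unfolding v21 v31 cross_pair by algebra
  have crP: "cross (vsub (x2,y2) (x1,y1)) (vsub (x3,y3) (x1,y1)) = Dl" unfolding Dl_def by simp
  have DlnZ: "Dl \<noteq> 0" using nd Dl_def by simp
  show "tri_area ?J1 ?J2 ?J3 / tri_area (x1,y1) (x2,y2) (x3,y3) = 2/rho"
    unfolding tri_area_def crJ crP cr rho_eq k2_def k3_def
    using area_helper[OF l1p l2p l3p D1p D2p D3p DlnZ] .
qed



lemma vertex:
  fixes a b x1 y1 x2 y2 x3 y3 :: real
  assumes ab: "a > 0" "b > 0"
    and el: "on_ellipse a b (x1,y1)"
    and nd: "(x2-x1)*(y3-y1) - (y2-y1)*(x3-x1) \<noteq> 0"
    and nb: "normal_bisects a b (x1,y1) (x2,y2) (x3,y3)"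
  defines "lq \<equiv> vlen (vsub (x2,y2) (x1,y1))" and "lr \<equiv> vlen (vsub (x3,y3) (x1,y1))"
  defines "eq \<equiv> x1*x2/a^2 + y1*y2/b^2 - 1" and "er \<equiv> x1*x3/a^2 + y1*y3/b^2 - 1"
  defines "n \<equiv> x1^2/a^4 + y1^2/b^4"
  shows "eq/lq = er/lr" and "cos (interior_angle (x1,y1) (x2,y2) (x3,y3)) = 2*(eq/lq)^2/n - 1"
proof -
  have ne2: "(x2,y2) \<noteq> (x1,y1)" using nd by auto
  have ne3: "(x3,y3) \<noteq> (x1,y1)" using nd by auto
  have lqp: "lq > 0" and sq: "lq^2 = (x2-x1)^2 + (y2-y1)^2" using len_pos[OF ne2] lq_def by auto
  have lrp: "lr > 0" and sr: "lr^2 = (x3-x1)^2 + (y3-y1)^2" using len_pos[OF ne3] lr_def by auto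
  define ux where "ux = (x2-x1)/lq"
  define uy where "uy = (y2-y1)/lq"
  define vx where "vx = (x3-x1)/lr"
  define vy where "vy = (y3-y1)/lr"
  define Nx where "Nx = x1/a^2"
  define Ny where "Ny = y1/b^2"
  have u1: "ux^2 + uy^2 = 1"
  proof -
    have "ux^2 + uy^2 = ((x2-x1)^2+(y2-y1)^2)/lq^2" unfolding ux_def uy_def by (simp add: power_divide add_divide_distrib)
    thus ?thesis using sq lqp ne2 by auto
  qed
  have v1: "vx^2 + vy^2 = 1"
  proof -
    have "vx^2 + vy^2 = ((x3-x1)^2+(y3-y1)^2)/lr^2" unfolding vx_def vy_def by (simp add: power_divide add_divide_distrib)
    thus ?thesis using sr lrp ne3 by auto
  qed
  have ud: "unit_dir (x1,y1) (x2,y2) = (ux, uy)"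
    unfolding unit_dir_def lq_def[symmetric] ux_def uy_def by simp
  have vd: "unit_dir (x1,y1) (x3,y3) = (vx, vy)"
    unfolding unit_dir_def lr_def[symmetric] vx_def vy_def by simp
  have cr: "Nx*(uy+vy) - Ny*(ux+vx) = 0"
    using nb unfolding normal_bisects_def int_bisector_dir_def ud vd ellipse_normal_def Nx_def Ny_def
    by simp
  have cuv: "ux*vy - uy*vx \<noteq> 0"
  proof -
    have "ux*vy - uy*vx = ((x2-x1)*(y3-y1) - (y2-y1)*(x3-x1))/(lq*lr)"
      unfolding ux_def uy_def vx_def vy_def using lqp lrp by (simp add: field_simps; algebra?)
    thus ?thesis using nd lqp lrp by simp
  qed
  have g0: "(ux+vx)^2 + (uy+vy)^2 \<noteq> 0"
  proof
    assume "(ux+vx)^2 + (uy+vy)^2 = 0"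
    hence "ux+vx = 0" "uy+vy = 0" by (simp_all add: sum_power2_eq_zero_iff)
    hence "vx = -ux" "vy = -uy" by auto
    thus False using cuv by simp
  qed
  have iden: "(Nx*(ux-vx) + Ny*(uy-vy)) * ((ux+vx)^2 + (uy+vy)^2)
     = (Nx*(ux+vx) + Ny*(uy+vy)) * ((ux+vx)*(ux-vx) + (uy+vy)*(uy-vy))
       + ((ux+vx)*Ny - (uy+vy)*Nx) * ((ux+vx)*(uy-vy) - (uy+vy)*(ux-vx))" by algebra
  have gh: "(ux+vx)*(ux-vx) + (uy+vy)*(uy-vy) = 0" using u1 v1 by algebra
  have "(Nx*(ux-vx) + Ny*(uy-vy)) * ((ux+vx)^2 + (uy+vy)^2) = 0"
    unfolding iden gh using cr by algebra
  hence "Nx*(ux-vx) + Ny*(uy-vy) = 0" using g0 by (simp only: mult_eq_0_iff) auto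
  hence Nuv: "Nx*ux + Ny*uy = Nx*vx + Ny*vy" by algebra
  have ell: "x1^2/a^2 + y1^2/b^2 = 1" using el unfolding on_ellipse_def by simp
  have Nu: "Nx*ux + Ny*uy = eq/lq"
  proof -
    have "Nx*(x2-x1) + Ny*(y2-y1) = (x1*x2/a^2 + y1*y2/b^2) - (x1^2/a^2 + y1^2/b^2)"
      unfolding Nx_def Ny_def using ab by (simp add: field_simps power2_eq_square)
    hence "Nx*(x2-x1) + Ny*(y2-y1) = eq" unfolding eq_def using ell by simp
    moreover have "Nx*ux + Ny*uy = (Nx*(x2-x1) + Ny*(y2-y1))/lq" unfolding ux_def uy_def by (simp add: add_divide_distrib)
    ultimately show ?thesis by simp
  qed
  have Nv: "Nx*vx + Ny*vy = er/lr"
  proof -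
    have "Nx*(x3-x1) + Ny*(y3-y1) = (x1*x3/a^2 + y1*y3/b^2) - (x1^2/a^2 + y1^2/b^2)"
      unfolding Nx_def Ny_def using ab by (simp add: field_simps power2_eq_square)
    hence "Nx*(x3-x1) + Ny*(y3-y1) = er" unfolding er_def using ell by simp
    moreover have "Nx*vx + Ny*vy = (Nx*(x3-x1) + Ny*(y3-y1))/lr" unfolding vx_def vy_def by (simp add: add_divide_distrib)
    ultimately show ?thesis by simp
  qed
  show J: "eq/lq = er/lr" using Nuv Nu Nv by simp
  have C: "cos (interior_angle (x1,y1) (x2,y2) (x3,y3)) = ux*vx + uy*vy"
    unfolding cos_interior lq_def[symmetric] lr_def[symmetric] ux_def uy_def vx_def vy_def
    using lqp lrp by (simp add: field_simps; algebra?)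
  have lag: "(Nx*(ux+vx) + Ny*(uy+vy))^2 = (Nx^2+Ny^2)*((ux+vx)^2 + (uy+vy)^2)"
  proof -
    have "(Nx*(ux+vx) + Ny*(uy+vy))^2 + (Nx*(uy+vy) - Ny*(ux+vx))^2 = (Nx^2+Ny^2)*((ux+vx)^2 + (uy+vy)^2)"
      by algebra
    thus ?thesis using cr by simp
  qed
  have Ng: "Nx*(ux+vx) + Ny*(uy+vy) = 2*(eq/lq)"
  proof -
    have "Nx*(ux+vx) + Ny*(uy+vy) = (Nx*ux+Ny*uy) + (Nx*vx+Ny*vy)" by (simp add: algebra_simps)
    thus ?thesis using Nu Nv J by simp
  qed
  have gg: "(ux+vx)^2 + (uy+vy)^2 = 2 + 2*(ux*vx+uy*vy)" using u1 v1 by algebra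
  have nN: "n = Nx^2+Ny^2" unfolding n_def Nx_def Ny_def by (simp add: power_divide power_mult[symmetric] )
  have np: "n > 0"
  proof -
    have "x1 \<noteq> 0 \<or> y1 \<noteq> 0" using ell by auto
    thus ?thesis unfolding n_def using ab by (auto simp: add_pos_nonneg add_nonneg_pos)
  qed
  have h4: "4*(eq/lq)^2 = n*(2 + 2*(ux*vx+uy*vy))" using lag unfolding Ng gg nN by (simp add: power2_eq_square algebra_simps)
  have "2*(eq/lq)^2 = n*(1 + (ux*vx+uy*vy))" using h4 by (simp add: algebra_simps)
  hence "2*(eq/lq)^2/n = 1 + (ux*vx+uy*vy)" using np by simp
  thus "cos (interior_angle (x1,y1) (x2,y2) (x3,y3)) = 2*(eq/lq)^2/n - 1"
    unfolding C by simp
qed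



lemma coreT:
  fixes aa bb K x y z :: real
  assumes ab: "aa > bb" "bb > 0" and Kp: "K > 0"
    and dxy: "x \<noteq> y" and dxz: "x \<noteq> z" and dyz: "y \<noteq> z"
    and Fxy: "(x-y)^2 = K*(aa*(x+y)^2 + bb*(1-x*y)^2)"
    and Fxz: "(x-z)^2 = K*(aa*(x+z)^2 + bb*(1-x*z)^2)"
    and Fyz: "(y-z)^2 = K*(aa*(y+z)^2 + bb*(1-y*z)^2)"
  shows "K^2*(aa-bb)^2 + K*(4*aa-2*(aa-bb)) - 3 = 0"
    and "2*K*aa*bb*((1+x^2)^2/(bb*(1+x^4) + 2*(2*aa-bb)*x^2) + (1+y^2)^2/(bb*(1+y^4) + 2*(2*aa-bb)*y^2)
          + (1+z^2)^2/(bb*(1+z^4) + 2*(2*aa-bb)*z^2)) = K*(aa+bb) + 3"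
proof -
  define Aq where "Aq = 1 - K*(aa + bb*x^2)"
  define Bq where "Bq = -2*x*(1+K*(aa-bb))"
  define Cq where "Cq = x^2*(1-K*aa) - K*bb"
  define s where "s = y + z"
  define p where "p = y * z"
  have Qpos: "\<And>t. bb*(1+t^4) + 2*(2*aa-bb)*t^2 > 0"
  proof -
    fix t :: real
    have "bb*(1+t^4) > 0" using ab by (simp add: add_pos_nonneg)
    moreover have "2*(2*aa-bb)*t^2 \<ge> 0" using ab by simp
    ultimately show "bb*(1+t^4) + 2*(2*aa-bb)*t^2 > 0" by simp
  qed
  have Fy: "Aq*y^2 + Bq*y + Cq = 0" using Fxy unfolding Aq_def Bq_def Cq_def by algebra
  have Fz: "Aq*z^2 + Bq*z + Cq = 0" using Fxz unfolding Aq_def Bq_def Cq_def by algebra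
  have "(y - z)*(Aq*(y+z) + Bq) = 0" using Fy Fz by algebra
  hence "Aq*(y+z) + Bq = 0" using dyz by simp
  hence v1: "Aq*s = -Bq" unfolding s_def by algebra
  have v2: "Aq*p = Cq" using Fy v1 unfolding s_def p_def by algebra
  have Aqnz: "Aq \<noteq> 0"
  proof
    assume A0: "Aq = 0"
    hence "Bq = 0" using v1 by simp
    moreover have "1 + K*(aa-bb) > 0" using ab Kp by (simp add: add_pos_pos)
    ultimately have "x = 0" unfolding Bq_def by simp
    hence "Cq = -K*bb" unfolding Cq_def by simp
    moreover have "Cq = 0" using v2 A0 by simp
    ultimately show False using Kp ab by simp
  qed
  have Fsp: "(y-z)^2 - K*(aa*(y+z)^2 + bb*(1-y*z)^2) = 0" using Fyz by simp
  have "Aq^2 * ((y-z)^2 - K*(aa*(y+z)^2 + bb*(1-y*z)^2))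
      = (Aq*s)^2 - 4*Aq*(Aq*p) - K*(aa*(Aq*s)^2 + bb*(Aq - Aq*p)^2)"
    unfolding s_def p_def by algebra
  also have "\<dots> = Bq^2 - 4*Aq*Cq - K*(aa*Bq^2 + bb*(Aq - Cq)^2)" unfolding v1 v2 by simp
  also have "\<dots> = -K*(K^2*(aa-bb)^2 + K*(4*aa-2*(aa-bb)) - 3)*(bb*(1+x^4) + 2*(2*aa-bb)*x^2)"
    unfolding Aq_def Bq_def Cq_def by algebra
  finally have "K*(K^2*(aa-bb)^2 + K*(4*aa-2*(aa-bb)) - 3)*(bb*(1+x^4) + 2*(2*aa-bb)*x^2) = 0"
    using Fsp by simp
  thus aK: "K^2*(aa-bb)^2 + K*(4*aa-2*(aa-bb)) - 3 = 0" using Kp Qpos[of x] by simp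
  define Qx where "Qx = bb*(1+x^4) + 2*(2*aa-bb)*x^2"
  define Qy where "Qy = bb*(1+y^4) + 2*(2*aa-bb)*y^2"
  define Qz where "Qz = bb*(1+z^4) + 2*(2*aa-bb)*z^2"
  define T where "T = 2*K*aa*bb*((1+x^2)^2*Qy*Qz + (1+y^2)^2*Qx*Qz + (1+z^2)^2*Qx*Qy) - (K*(aa+bb)+3)*Qx*Qy*Qz"
  have T1: "T = (24*aa*bb^2*p + 48*aa*bb^2*p*s^2*x^2 - 96*aa*bb^2*p*x^2 + 24*aa*bb^2*p*x^4 + 48*aa*bb^2*p^2 - 12*aa*bb^2*p^2*s^2 + 48*aa*bb^2*p^2*s^2*x^2 - 12*aa*bb^2*p^2*s^2*x^4 - 168*aa*bb^2*p^2*x^2 + 48*aa*bb^2*p^2*x^4 + 24*aa*bb^2*p^3 - 96*aa*bb^2*p^3*x^2 + 24*aa*bb^2*p^3*x^4 - 12*aa*bb^2*p^4*x^2 - 12*aa*bb^2*s^2 + 48*aa*bb^2*s^2*x^2 - 12*aa*bb^2*s^2*x^4 - 12*aa*bb^2*s^4*x^2 - 12*aa*bb^2*x^2 + 5*aa*bb^3*K + 12*aa*bb^3*K*p - 20*aa*bb^3*K*p*s^2 + 24*aa*bb^3*K*p*s^2*x^2 - 20*aa*bb^3*K*p*s^2*x^4 - 8*aa*bb^3*K*p*x^2 + 12*aa*bb^3*K*p*x^4 + 14*aa*bb^3*K*p^2 - 6*aa*bb^3*K*p^2*s^2 + 4*aa*bb^3*K*p^2*s^2*x^2 - 6*aa*bb^3*K*p^2*s^2*x^4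 - 4*aa*bb^3*K*p^2*x^2 + 14*aa*bb^3*K*p^2*x^4 + 12*aa*bb^3*K*p^3 - 8*aa*bb^3*K*p^3*x^2 + 12*aa*bb^3*K*p^3*x^4 + 5*aa*bb^3*K*p^4 - 6*aa*bb^3*K*p^4*x^2 + 5*aa*bb^3*K*p^4*x^4 - 6*aa*bb^3*K*s^2 + 4*aa*bb^3*K*s^2*x^2 - 6*aa*bb^3*K*s^2*x^4 + 5*aa*bb^3*K*s^4 - 6*aa*bb^3*K*s^4*x^2 + 5*aa*bb^3*K*s^4*x^4 - 6*aa*bb^3*K*x^2 + 5*aa*bb^3*K*x^4 + 96*aa^2*bb*p*x^2 - 48*aa^2*bb*p^2 - 48*aa^2*bb*p^2*s^2*x^2 + 288*aa^2*bb*p^2*x^2 - 48*aa^2*bb*p^2*x^4 + 96*aa^2*bb*p^3*x^2 - 48*aa^2*bb*s^2*x^2 - 24*aa^2*bb^2*K*p - 48*aa^2*bb^2*K*p*s^2*x^2 - 24*aa^2*bb^2*K*p*x^4 + 12*aa^2*bb^2*K*p^2*s^2 + 12*aa^2*bb^2*K*p^2*s^2*x^4 - 120*aa^2*bb^2*K*p^2*x^2 - 24*aa^2*bb^2*K*p^3 - 24*aa^2*bb^2*K*p^3*x^4 + 12*aa^2*bb^2*K*p^4*x^2 + 12*aa^2*bb^2*K*s^2 + 12*aa^2*bb^2*K*s^2*x^4 + 12*aa^2*bb^2*K*s^4*x^2 + 12*aa^2*bb^2*K*x^2 - 32*aa^3*bb*K*p*x^2 + 16*aa^3*bb*K*p^2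 + 16*aa^3*bb*K*p^2*s^2*x^2 + 224*aa^3*bb*K*p^2*x^2 + 16*aa^3*bb*K*p^2*x^4 - 32*aa^3*bb*K*p^3*x^2 + 16*aa^3*bb*K*s^2*x^2 - 192*aa^3*p^2*x^2 - 64*aa^4*K*p^2*x^2 - 3*bb^3 - 12*bb^3*p + 12*bb^3*p*s^2 - 24*bb^3*p*s^2*x^2 + 12*bb^3*p*s^2*x^4 + 24*bb^3*p*x^2 - 12*bb^3*p*x^4 - 18*bb^3*p^2 + 6*bb^3*p^2*s^2 - 12*bb^3*p^2*s^2*x^2 + 6*bb^3*p^2*s^2*x^4 + 36*bb^3*p^2*x^2 - 18*bb^3*p^2*x^4 - 12*bb^3*p^3 + 24*bb^3*p^3*x^2 - 12*bb^3*p^3*x^4 - 3*bb^3*p^4 + 6*bb^3*p^4*x^2 - 3*bb^3*p^4*x^4 + 6*bb^3*s^2 - 12*bb^3*s^2*x^2 + 6*bb^3*s^2*x^4 - 3*bb^3*s^4 + 6*bb^3*s^4*x^2 - 3*bb^3*s^4*x^4 + 6*bb^3*x^2 - 3*bb^3*x^4 - bb^4*K - 4*bb^4*K*p + 4*bb^4*K*p*s^2 - 8*bb^4*K*p*s^2*x^2 + 4*bb^4*K*p*s^2*x^4 + 8*bb^4*K*p*x^2 - 4*bb^4*K*p*x^4 - 6*bb^4*K*p^2 + 2*bb^4*K*p^2*s^2 - 4*bb^4*K*p^2*s^2*x^2 + 2*bb^4*K*p^2*s^2*x^4 + 12*bb^4*K*p^2*x^2 - 6*bb^4*K*p^2*x^4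 - 4*bb^4*K*p^3 + 8*bb^4*K*p^3*x^2 - 4*bb^4*K*p^3*x^4 - bb^4*K*p^4 + 2*bb^4*K*p^4*x^2 - bb^4*K*p^4*x^4 + 2*bb^4*K*s^2 - 4*bb^4*K*s^2*x^2 + 2*bb^4*K*s^2*x^4 - bb^4*K*s^4 + 2*bb^4*K*s^4*x^2 - bb^4*K*s^4*x^4 + 2*bb^4*K*x^2 - bb^4*K*x^4)"
    unfolding T_def Qx_def Qy_def Qz_def s_def p_def by algebra
  have T2: "Aq^4 * (24*aa*bb^2*p + 48*aa*bb^2*p*s^2*x^2 - 96*aa*bb^2*p*x^2 + 24*aa*bb^2*p*x^4 + 48*aa*bb^2*p^2 - 12*aa*bb^2*p^2*s^2 + 48*aa*bb^2*p^2*s^2*x^2 - 12*aa*bb^2*p^2*s^2*x^4 - 168*aa*bb^2*p^2*x^2 + 48*aa*bb^2*p^2*x^4 + 24*aa*bb^2*p^3 - 96*aa*bb^2*p^3*x^2 + 24*aa*bb^2*p^3*x^4 - 12*aa*bb^2*p^4*x^2 - 12*aa*bb^2*s^2 + 48*aa*bb^2*s^2*x^2 - 12*aa*bb^2*s^2*x^4 - 12*aa*bb^2*s^4*x^2 - 12*aa*bb^2*x^2 + 5*aa*bb^3*K + 12*aa*bb^3*K*p - 20*aa*bb^3*K*p*s^2 + 24*aa*bb^3*K*p*s^2*x^2 - 20*aa*bb^3*K*p*s^2*x^4 - 8*aa*bb^3*K*p*x^2 + 12*aa*bb^3*K*p*x^4 + 14*aa*bb^3*K*p^2 - 6*aa*bb^3*K*p^2*s^2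 + 4*aa*bb^3*K*p^2*s^2*x^2 - 6*aa*bb^3*K*p^2*s^2*x^4 - 4*aa*bb^3*K*p^2*x^2 + 14*aa*bb^3*K*p^2*x^4 + 12*aa*bb^3*K*p^3 - 8*aa*bb^3*K*p^3*x^2 + 12*aa*bb^3*K*p^3*x^4 + 5*aa*bb^3*K*p^4 - 6*aa*bb^3*K*p^4*x^2 + 5*aa*bb^3*K*p^4*x^4 - 6*aa*bb^3*K*s^2 + 4*aa*bb^3*K*s^2*x^2 - 6*aa*bb^3*K*s^2*x^4 + 5*aa*bb^3*K*s^4 - 6*aa*bb^3*K*s^4*x^2 + 5*aa*bb^3*K*s^4*x^4 - 6*aa*bb^3*K*x^2 + 5*aa*bb^3*K*x^4 + 96*aa^2*bb*p*x^2 - 48*aa^2*bb*p^2 - 48*aa^2*bb*p^2*s^2*x^2 + 288*aa^2*bb*p^2*x^2 - 48*aa^2*bb*p^2*x^4 + 96*aa^2*bb*p^3*x^2 - 48*aa^2*bb*s^2*x^2 - 24*aa^2*bb^2*K*p - 48*aa^2*bb^2*K*p*s^2*x^2 - 24*aa^2*bb^2*K*p*x^4 + 12*aa^2*bb^2*K*p^2*s^2 + 12*aa^2*bb^2*K*p^2*s^2*x^4 - 120*aa^2*bb^2*K*p^2*x^2 - 24*aa^2*bb^2*K*p^3 - 24*aa^2*bb^2*K*p^3*x^4 + 12*aa^2*bb^2*K*p^4*x^2 + 12*aa^2*bb^2*K*s^2 + 12*aa^2*bb^2*K*s^2*x^4 + 12*aa^2*bb^2*K*s^4*x^2 + 12*aa^2*bb^2*K*x^2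 - 32*aa^3*bb*K*p*x^2 + 16*aa^3*bb*K*p^2 + 16*aa^3*bb*K*p^2*s^2*x^2 + 224*aa^3*bb*K*p^2*x^2 + 16*aa^3*bb*K*p^2*x^4 - 32*aa^3*bb*K*p^3*x^2 + 16*aa^3*bb*K*s^2*x^2 - 192*aa^3*p^2*x^2 - 64*aa^4*K*p^2*x^2 - 3*bb^3 - 12*bb^3*p + 12*bb^3*p*s^2 - 24*bb^3*p*s^2*x^2 + 12*bb^3*p*s^2*x^4 + 24*bb^3*p*x^2 - 12*bb^3*p*x^4 - 18*bb^3*p^2 + 6*bb^3*p^2*s^2 - 12*bb^3*p^2*s^2*x^2 + 6*bb^3*p^2*s^2*x^4 + 36*bb^3*p^2*x^2 - 18*bb^3*p^2*x^4 - 12*bb^3*p^3 + 24*bb^3*p^3*x^2 - 12*bb^3*p^3*x^4 - 3*bb^3*p^4 + 6*bb^3*p^4*x^2 - 3*bb^3*p^4*x^4 + 6*bb^3*s^2 - 12*bb^3*s^2*x^2 + 6*bb^3*s^2*x^4 - 3*bb^3*s^4 + 6*bb^3*s^4*x^2 - 3*bb^3*s^4*x^4 + 6*bb^3*x^2 - 3*bb^3*x^4 - bb^4*K - 4*bb^4*K*p + 4*bb^4*K*p*s^2 - 8*bb^4*K*p*s^2*x^2 + 4*bb^4*K*p*s^2*x^4 + 8*bb^4*K*p*x^2 - 4*bb^4*K*p*x^4 - 6*bb^4*K*p^2 + 2*bb^4*K*p^2*s^2 - 4*bb^4*K*p^2*s^2*x^2 + 2*bb^4*K*p^2*s^2*x^4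 + 12*bb^4*K*p^2*x^2 - 6*bb^4*K*p^2*x^4 - 4*bb^4*K*p^3 + 8*bb^4*K*p^3*x^2 - 4*bb^4*K*p^3*x^4 - bb^4*K*p^4 + 2*bb^4*K*p^4*x^2 - bb^4*K*p^4*x^4 + 2*bb^4*K*s^2 - 4*bb^4*K*s^2*x^2 + 2*bb^4*K*s^2*x^4 - bb^4*K*s^4 + 2*bb^4*K*s^4*x^2 - bb^4*K*s^4*x^4 + 2*bb^4*K*x^2 - bb^4*K*x^4) = (48*aa*bb^2*(Aq*p)*(Aq*s)^2*(Aq)*x^2 + 24*aa*bb^2*(Aq*p)*(Aq)^3 - 96*aa*bb^2*(Aq*p)*(Aq)^3*x^2 + 24*aa*bb^2*(Aq*p)*(Aq)^3*x^4 - 12*aa*bb^2*(Aq*p)^2*(Aq*s)^2 + 48*aa*bb^2*(Aq*p)^2*(Aq*s)^2*x^2 - 12*aa*bb^2*(Aq*p)^2*(Aq*s)^2*x^4 + 48*aa*bb^2*(Aq*p)^2*(Aq)^2 - 168*aa*bb^2*(Aq*p)^2*(Aq)^2*x^2 + 48*aa*bb^2*(Aq*p)^2*(Aq)^2*x^4 + 24*aa*bb^2*(Aq*p)^3*(Aq) - 96*aa*bb^2*(Aq*p)^3*(Aq)*x^2 + 24*aa*bb^2*(Aq*p)^3*(Aq)*x^4 - 12*aa*bb^2*(Aq*p)^4*x^2 - 12*aa*bb^2*(Aq*s)^2*(Aq)^2 + 48*aa*bb^2*(Aq*s)^2*(Aq)^2*x^2 - 12*aa*bb^2*(Aq*s)^2*(Aq)^2*x^4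 - 12*aa*bb^2*(Aq*s)^4*x^2 - 12*aa*bb^2*(Aq)^4*x^2 - 20*aa*bb^3*K*(Aq*p)*(Aq*s)^2*(Aq) + 24*aa*bb^3*K*(Aq*p)*(Aq*s)^2*(Aq)*x^2 - 20*aa*bb^3*K*(Aq*p)*(Aq*s)^2*(Aq)*x^4 + 12*aa*bb^3*K*(Aq*p)*(Aq)^3 - 8*aa*bb^3*K*(Aq*p)*(Aq)^3*x^2 + 12*aa*bb^3*K*(Aq*p)*(Aq)^3*x^4 - 6*aa*bb^3*K*(Aq*p)^2*(Aq*s)^2 + 4*aa*bb^3*K*(Aq*p)^2*(Aq*s)^2*x^2 - 6*aa*bb^3*K*(Aq*p)^2*(Aq*s)^2*x^4 + 14*aa*bb^3*K*(Aq*p)^2*(Aq)^2 - 4*aa*bb^3*K*(Aq*p)^2*(Aq)^2*x^2 + 14*aa*bb^3*K*(Aq*p)^2*(Aq)^2*x^4 + 12*aa*bb^3*K*(Aq*p)^3*(Aq) - 8*aa*bb^3*K*(Aq*p)^3*(Aq)*x^2 + 12*aa*bb^3*K*(Aq*p)^3*(Aq)*x^4 + 5*aa*bb^3*K*(Aq*p)^4 - 6*aa*bb^3*K*(Aq*p)^4*x^2 + 5*aa*bb^3*K*(Aq*p)^4*x^4 - 6*aa*bb^3*K*(Aq*s)^2*(Aq)^2 + 4*aa*bb^3*K*(Aq*s)^2*(Aq)^2*x^2 - 6*aa*bb^3*K*(Aq*s)^2*(Aq)^2*x^4 + 5*aa*bb^3*K*(Aq*s)^4 - 6*aa*bb^3*K*(Aq*s)^4*x^2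 + 5*aa*bb^3*K*(Aq*s)^4*x^4 + 5*aa*bb^3*K*(Aq)^4 - 6*aa*bb^3*K*(Aq)^4*x^2 + 5*aa*bb^3*K*(Aq)^4*x^4 + 96*aa^2*bb*(Aq*p)*(Aq)^3*x^2 - 48*aa^2*bb*(Aq*p)^2*(Aq*s)^2*x^2 - 48*aa^2*bb*(Aq*p)^2*(Aq)^2 + 288*aa^2*bb*(Aq*p)^2*(Aq)^2*x^2 - 48*aa^2*bb*(Aq*p)^2*(Aq)^2*x^4 + 96*aa^2*bb*(Aq*p)^3*(Aq)*x^2 - 48*aa^2*bb*(Aq*s)^2*(Aq)^2*x^2 - 48*aa^2*bb^2*K*(Aq*p)*(Aq*s)^2*(Aq)*x^2 - 24*aa^2*bb^2*K*(Aq*p)*(Aq)^3 - 24*aa^2*bb^2*K*(Aq*p)*(Aq)^3*x^4 + 12*aa^2*bb^2*K*(Aq*p)^2*(Aq*s)^2 + 12*aa^2*bb^2*K*(Aq*p)^2*(Aq*s)^2*x^4 - 120*aa^2*bb^2*K*(Aq*p)^2*(Aq)^2*x^2 - 24*aa^2*bb^2*K*(Aq*p)^3*(Aq) - 24*aa^2*bb^2*K*(Aq*p)^3*(Aq)*x^4 + 12*aa^2*bb^2*K*(Aq*p)^4*x^2 + 12*aa^2*bb^2*K*(Aq*s)^2*(Aq)^2 + 12*aa^2*bb^2*K*(Aq*s)^2*(Aq)^2*x^4 + 12*aa^2*bb^2*K*(Aq*s)^4*x^2 + 12*aa^2*bb^2*K*(Aq)^4*x^2 - 32*aa^3*bb*K*(Aq*p)*(Aq)^3*x^2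 + 16*aa^3*bb*K*(Aq*p)^2*(Aq*s)^2*x^2 + 16*aa^3*bb*K*(Aq*p)^2*(Aq)^2 + 224*aa^3*bb*K*(Aq*p)^2*(Aq)^2*x^2 + 16*aa^3*bb*K*(Aq*p)^2*(Aq)^2*x^4 - 32*aa^3*bb*K*(Aq*p)^3*(Aq)*x^2 + 16*aa^3*bb*K*(Aq*s)^2*(Aq)^2*x^2 - 192*aa^3*(Aq*p)^2*(Aq)^2*x^2 - 64*aa^4*K*(Aq*p)^2*(Aq)^2*x^2 + 12*bb^3*(Aq*p)*(Aq*s)^2*(Aq) - 24*bb^3*(Aq*p)*(Aq*s)^2*(Aq)*x^2 + 12*bb^3*(Aq*p)*(Aq*s)^2*(Aq)*x^4 - 12*bb^3*(Aq*p)*(Aq)^3 + 24*bb^3*(Aq*p)*(Aq)^3*x^2 - 12*bb^3*(Aq*p)*(Aq)^3*x^4 + 6*bb^3*(Aq*p)^2*(Aq*s)^2 - 12*bb^3*(Aq*p)^2*(Aq*s)^2*x^2 + 6*bb^3*(Aq*p)^2*(Aq*s)^2*x^4 - 18*bb^3*(Aq*p)^2*(Aq)^2 + 36*bb^3*(Aq*p)^2*(Aq)^2*x^2 - 18*bb^3*(Aq*p)^2*(Aq)^2*x^4 - 12*bb^3*(Aq*p)^3*(Aq) + 24*bb^3*(Aq*p)^3*(Aq)*x^2 - 12*bb^3*(Aq*p)^3*(Aq)*x^4 - 3*bb^3*(Aq*p)^4 + 6*bb^3*(Aq*p)^4*x^2 - 3*bb^3*(Aq*p)^4*x^4 + 6*bb^3*(Aq*s)^2*(Aq)^2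 - 12*bb^3*(Aq*s)^2*(Aq)^2*x^2 + 6*bb^3*(Aq*s)^2*(Aq)^2*x^4 - 3*bb^3*(Aq*s)^4 + 6*bb^3*(Aq*s)^4*x^2 - 3*bb^3*(Aq*s)^4*x^4 - 3*bb^3*(Aq)^4 + 6*bb^3*(Aq)^4*x^2 - 3*bb^3*(Aq)^4*x^4 + 4*bb^4*K*(Aq*p)*(Aq*s)^2*(Aq) - 8*bb^4*K*(Aq*p)*(Aq*s)^2*(Aq)*x^2 + 4*bb^4*K*(Aq*p)*(Aq*s)^2*(Aq)*x^4 - 4*bb^4*K*(Aq*p)*(Aq)^3 + 8*bb^4*K*(Aq*p)*(Aq)^3*x^2 - 4*bb^4*K*(Aq*p)*(Aq)^3*x^4 + 2*bb^4*K*(Aq*p)^2*(Aq*s)^2 - 4*bb^4*K*(Aq*p)^2*(Aq*s)^2*x^2 + 2*bb^4*K*(Aq*p)^2*(Aq*s)^2*x^4 - 6*bb^4*K*(Aq*p)^2*(Aq)^2 + 12*bb^4*K*(Aq*p)^2*(Aq)^2*x^2 - 6*bb^4*K*(Aq*p)^2*(Aq)^2*x^4 - 4*bb^4*K*(Aq*p)^3*(Aq) + 8*bb^4*K*(Aq*p)^3*(Aq)*x^2 - 4*bb^4*K*(Aq*p)^3*(Aq)*x^4 - bb^4*K*(Aq*p)^4 + 2*bb^4*K*(Aq*p)^4*x^2 - bb^4*K*(Aq*p)^4*x^4 + 2*bb^4*K*(Aq*s)^2*(Aq)^2 - 4*bb^4*K*(Aq*s)^2*(Aq)^2*x^2 +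 2*bb^4*K*(Aq*s)^2*(Aq)^2*x^4 - bb^4*K*(Aq*s)^4 + 2*bb^4*K*(Aq*s)^4*x^2 - bb^4*K*(Aq*s)^4*x^4 - bb^4*K*(Aq)^4 + 2*bb^4*K*(Aq)^4*x^2 - bb^4*K*(Aq)^4*x^4)"
    by algebra
  have T3: "(48*aa*bb^2*(Cq)*(-Bq)^2*(Aq)*x^2 + 24*aa*bb^2*(Cq)*(Aq)^3 - 96*aa*bb^2*(Cq)*(Aq)^3*x^2 + 24*aa*bb^2*(Cq)*(Aq)^3*x^4 - 12*aa*bb^2*(Cq)^2*(-Bq)^2 + 48*aa*bb^2*(Cq)^2*(-Bq)^2*x^2 - 12*aa*bb^2*(Cq)^2*(-Bq)^2*x^4 + 48*aa*bb^2*(Cq)^2*(Aq)^2 - 168*aa*bb^2*(Cq)^2*(Aq)^2*x^2 + 48*aa*bb^2*(Cq)^2*(Aq)^2*x^4 + 24*aa*bb^2*(Cq)^3*(Aq) - 96*aa*bb^2*(Cq)^3*(Aq)*x^2 + 24*aa*bb^2*(Cq)^3*(Aq)*x^4 - 12*aa*bb^2*(Cq)^4*x^2 - 12*aa*bb^2*(-Bq)^2*(Aq)^2 + 48*aa*bb^2*(-Bq)^2*(Aq)^2*x^2 - 12*aa*bb^2*(-Bq)^2*(Aq)^2*x^4 - 12*aa*bb^2*(-Bq)^4*x^2 - 12*aa*bb^2*(Aq)^4*x^2 - 20*aa*bb^3*K*(Cq)*(-Bq)^2*(Aq) + 24*aa*bb^3*K*(Cq)*(-Bq)^2*(Aq)*x^2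 - 20*aa*bb^3*K*(Cq)*(-Bq)^2*(Aq)*x^4 + 12*aa*bb^3*K*(Cq)*(Aq)^3 - 8*aa*bb^3*K*(Cq)*(Aq)^3*x^2 + 12*aa*bb^3*K*(Cq)*(Aq)^3*x^4 - 6*aa*bb^3*K*(Cq)^2*(-Bq)^2 + 4*aa*bb^3*K*(Cq)^2*(-Bq)^2*x^2 - 6*aa*bb^3*K*(Cq)^2*(-Bq)^2*x^4 + 14*aa*bb^3*K*(Cq)^2*(Aq)^2 - 4*aa*bb^3*K*(Cq)^2*(Aq)^2*x^2 + 14*aa*bb^3*K*(Cq)^2*(Aq)^2*x^4 + 12*aa*bb^3*K*(Cq)^3*(Aq) - 8*aa*bb^3*K*(Cq)^3*(Aq)*x^2 + 12*aa*bb^3*K*(Cq)^3*(Aq)*x^4 + 5*aa*bb^3*K*(Cq)^4 - 6*aa*bb^3*K*(Cq)^4*x^2 + 5*aa*bb^3*K*(Cq)^4*x^4 - 6*aa*bb^3*K*(-Bq)^2*(Aq)^2 + 4*aa*bb^3*K*(-Bq)^2*(Aq)^2*x^2 - 6*aa*bb^3*K*(-Bq)^2*(Aq)^2*x^4 + 5*aa*bb^3*K*(-Bq)^4 - 6*aa*bb^3*K*(-Bq)^4*x^2 + 5*aa*bb^3*K*(-Bq)^4*x^4 + 5*aa*bb^3*K*(Aq)^4 - 6*aa*bb^3*K*(Aq)^4*x^2 + 5*aa*bb^3*K*(Aq)^4*x^4 + 96*aa^2*bb*(Cq)*(Aq)^3*x^2 - 48*aa^2*bb*(Cq)^2*(-Bq)^2*x^2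 - 48*aa^2*bb*(Cq)^2*(Aq)^2 + 288*aa^2*bb*(Cq)^2*(Aq)^2*x^2 - 48*aa^2*bb*(Cq)^2*(Aq)^2*x^4 + 96*aa^2*bb*(Cq)^3*(Aq)*x^2 - 48*aa^2*bb*(-Bq)^2*(Aq)^2*x^2 - 48*aa^2*bb^2*K*(Cq)*(-Bq)^2*(Aq)*x^2 - 24*aa^2*bb^2*K*(Cq)*(Aq)^3 - 24*aa^2*bb^2*K*(Cq)*(Aq)^3*x^4 + 12*aa^2*bb^2*K*(Cq)^2*(-Bq)^2 + 12*aa^2*bb^2*K*(Cq)^2*(-Bq)^2*x^4 - 120*aa^2*bb^2*K*(Cq)^2*(Aq)^2*x^2 - 24*aa^2*bb^2*K*(Cq)^3*(Aq) - 24*aa^2*bb^2*K*(Cq)^3*(Aq)*x^4 + 12*aa^2*bb^2*K*(Cq)^4*x^2 + 12*aa^2*bb^2*K*(-Bq)^2*(Aq)^2 + 12*aa^2*bb^2*K*(-Bq)^2*(Aq)^2*x^4 + 12*aa^2*bb^2*K*(-Bq)^4*x^2 + 12*aa^2*bb^2*K*(Aq)^4*x^2 - 32*aa^3*bb*K*(Cq)*(Aq)^3*x^2 + 16*aa^3*bb*K*(Cq)^2*(-Bq)^2*x^2 + 16*aa^3*bb*K*(Cq)^2*(Aq)^2 + 224*aa^3*bb*K*(Cq)^2*(Aq)^2*x^2 + 16*aa^3*bb*K*(Cq)^2*(Aq)^2*x^4 - 32*aa^3*bb*K*(Cq)^3*(Aq)*x^2 + 16*aa^3*bb*K*(-Bq)^2*(Aq)^2*x^2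 - 192*aa^3*(Cq)^2*(Aq)^2*x^2 - 64*aa^4*K*(Cq)^2*(Aq)^2*x^2 + 12*bb^3*(Cq)*(-Bq)^2*(Aq) - 24*bb^3*(Cq)*(-Bq)^2*(Aq)*x^2 + 12*bb^3*(Cq)*(-Bq)^2*(Aq)*x^4 - 12*bb^3*(Cq)*(Aq)^3 + 24*bb^3*(Cq)*(Aq)^3*x^2 - 12*bb^3*(Cq)*(Aq)^3*x^4 + 6*bb^3*(Cq)^2*(-Bq)^2 - 12*bb^3*(Cq)^2*(-Bq)^2*x^2 + 6*bb^3*(Cq)^2*(-Bq)^2*x^4 - 18*bb^3*(Cq)^2*(Aq)^2 + 36*bb^3*(Cq)^2*(Aq)^2*x^2 - 18*bb^3*(Cq)^2*(Aq)^2*x^4 - 12*bb^3*(Cq)^3*(Aq) + 24*bb^3*(Cq)^3*(Aq)*x^2 - 12*bb^3*(Cq)^3*(Aq)*x^4 - 3*bb^3*(Cq)^4 + 6*bb^3*(Cq)^4*x^2 - 3*bb^3*(Cq)^4*x^4 + 6*bb^3*(-Bq)^2*(Aq)^2 - 12*bb^3*(-Bq)^2*(Aq)^2*x^2 + 6*bb^3*(-Bq)^2*(Aq)^2*x^4 - 3*bb^3*(-Bq)^4 + 6*bb^3*(-Bq)^4*x^2 - 3*bb^3*(-Bq)^4*x^4 - 3*bb^3*(Aq)^4 + 6*bb^3*(Aq)^4*x^2 - 3*bb^3*(Aq)^4*x^4 + 4*bb^4*K*(Cq)*(-Bq)^2*(Aq) - 8*bb^4*K*(Cq)*(-Bq)^2*(Aq)*x^2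 + 4*bb^4*K*(Cq)*(-Bq)^2*(Aq)*x^4 - 4*bb^4*K*(Cq)*(Aq)^3 + 8*bb^4*K*(Cq)*(Aq)^3*x^2 - 4*bb^4*K*(Cq)*(Aq)^3*x^4 + 2*bb^4*K*(Cq)^2*(-Bq)^2 - 4*bb^4*K*(Cq)^2*(-Bq)^2*x^2 + 2*bb^4*K*(Cq)^2*(-Bq)^2*x^4 - 6*bb^4*K*(Cq)^2*(Aq)^2 + 12*bb^4*K*(Cq)^2*(Aq)^2*x^2 - 6*bb^4*K*(Cq)^2*(Aq)^2*x^4 - 4*bb^4*K*(Cq)^3*(Aq) + 8*bb^4*K*(Cq)^3*(Aq)*x^2 - 4*bb^4*K*(Cq)^3*(Aq)*x^4 - bb^4*K*(Cq)^4 + 2*bb^4*K*(Cq)^4*x^2 - bb^4*K*(Cq)^4*x^4 + 2*bb^4*K*(-Bq)^2*(Aq)^2 - 4*bb^4*K*(-Bq)^2*(Aq)^2*x^2 + 2*bb^4*K*(-Bq)^2*(Aq)^2*x^4 - bb^4*K*(-Bq)^4 + 2*bb^4*K*(-Bq)^4*x^2 - bb^4*K*(-Bq)^4*x^4 - bb^4*K*(Aq)^4 + 2*bb^4*K*(Aq)^4*x^2 - bb^4*K*(Aq)^4*x^4) = (- 36*aa*bb^2*x^2 + 144*aa*bb^2*x^4 - 216*aa*bb^2*x^6 + 144*aa*bb^2*x^8 - 36*aa*bb^2*x^10 - 7*aa*bb^3*K + 102*aa*bb^3*K*x^2 - 345*aa*bb^3*K*x^4 + 500*aa*bb^3*K*x^6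 - 345*aa*bb^3*K*x^8 + 102*aa*bb^3*K*x^10 - 7*aa*bb^3*K*x^12 + 4*aa*bb^4*K^2 - 96*aa*bb^4*K^2*x^2 + 348*aa*bb^4*K^2*x^4 - 512*aa*bb^4*K^2*x^6 + 348*aa*bb^4*K^2*x^8 - 96*aa*bb^4*K^2*x^10 + 4*aa*bb^4*K^2*x^12 + 14*aa*bb^5*K^3 + 4*aa*bb^5*K^3*x^2 - 142*aa*bb^5*K^3*x^4 + 248*aa*bb^5*K^3*x^6 - 142*aa*bb^5*K^3*x^8 + 4*aa*bb^5*K^3*x^10 + 14*aa*bb^5*K^3*x^12 - 12*aa*bb^6*K^4 + 52*aa*bb^6*K^4*x^2 - 100*aa*bb^6*K^4*x^4 + 120*aa*bb^6*K^4*x^6 - 100*aa*bb^6*K^4*x^8 + 52*aa*bb^6*K^4*x^10 - 12*aa*bb^6*K^4*x^12 + aa*bb^7*K^5 - 26*aa*bb^7*K^5*x^2 + 95*aa*bb^7*K^5*x^4 - 140*aa*bb^7*K^5*x^6 + 95*aa*bb^7*K^5*x^8 - 26*aa*bb^7*K^5*x^10 + aa*bb^7*K^5*x^12 - 144*aa^2*bb*x^4 + 288*aa^2*bb*x^6 - 144*aa^2*bb*x^8 - 12*aa^2*bb^2*K*x^2 + 24*aa^2*bb^2*K*x^6 - 12*aa^2*bb^2*K*x^10 + 10*aa^2*bb^3*K^2 - 12*aa^2*bb^3*K^2*x^2 + 54*aa^2*bb^3*K^2*x^4 - 104*aa^2*bb^3*K^2*x^6 + 54*aa^2*bb^3*K^2*x^8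 - 12*aa^2*bb^3*K^2*x^10 + 10*aa^2*bb^3*K^2*x^12 - 30*aa^2*bb^4*K^3 + 172*aa^2*bb^4*K^3*x^2 - 2*aa^2*bb^4*K^3*x^4 - 280*aa^2*bb^4*K^3*x^6 - 2*aa^2*bb^4*K^3*x^8 + 172*aa^2*bb^4*K^3*x^10 - 30*aa^2*bb^4*K^3*x^12 + 14*aa^2*bb^5*K^4 - 164*aa^2*bb^5*K^4*x^2 + 322*aa^2*bb^5*K^4*x^4 - 344*aa^2*bb^5*K^4*x^6 + 322*aa^2*bb^5*K^4*x^8 - 164*aa^2*bb^5*K^4*x^10 + 14*aa^2*bb^5*K^4*x^12 + 6*aa^2*bb^6*K^5 + 16*aa^2*bb^6*K^5*x^2 - 230*aa^2*bb^6*K^5*x^4 + 416*aa^2*bb^6*K^5*x^6 - 230*aa^2*bb^6*K^5*x^8 + 16*aa^2*bb^6*K^5*x^10 + 6*aa^2*bb^6*K^5*x^12 + 240*aa^3*bb*K*x^4 - 928*aa^3*bb*K*x^6 + 240*aa^3*bb*K*x^8 + 24*aa^3*bb^2*K^2*x^2 + 96*aa^3*bb^2*K^2*x^4 + 400*aa^3*bb^2*K^2*x^6 + 96*aa^3*bb^2*K^2*x^8 + 24*aa^3*bb^2*K^2*x^10 + 10*aa^3*bb^3*K^3 - 244*aa^3*bb^3*K^3*x^2 + 150*aa^3*bb^3*K^3*x^4 + 808*aa^3*bb^3*K^3*x^6 + 150*aa^3*bb^3*K^3*x^8 - 244*aa^3*bb^3*K^3*x^10 + 10*aa^3*bb^3*K^3*x^12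 + 4*aa^3*bb^4*K^4 + 144*aa^3*bb^4*K^4*x^2 - 676*aa^3*bb^4*K^4*x^4 + 608*aa^3*bb^4*K^4*x^6 - 676*aa^3*bb^4*K^4*x^8 + 144*aa^3*bb^4*K^4*x^10 + 4*aa^3*bb^4*K^4*x^12 - 14*aa^3*bb^5*K^5 + 76*aa^3*bb^5*K^5*x^2 + 190*aa^3*bb^5*K^5*x^4 - 696*aa^3*bb^5*K^5*x^6 + 190*aa^3*bb^5*K^5*x^8 + 76*aa^3*bb^5*K^5*x^10 - 14*aa^3*bb^5*K^5*x^12 - 192*aa^3*x^6 - 288*aa^4*bb*K^2*x^4 + 832*aa^4*bb*K^2*x^6 - 288*aa^4*bb*K^2*x^8 + 104*aa^4*bb^2*K^3*x^2 - 448*aa^4*bb^2*K^3*x^4 - 1232*aa^4*bb^2*K^3*x^6 - 448*aa^4*bb^2*K^3*x^8 + 104*aa^4*bb^2*K^3*x^10 - 7*aa^4*bb^3*K^4 + 26*aa^4*bb^3*K^4*x^2 + 631*aa^4*bb^3*K^4*x^4 - 1044*aa^4*bb^3*K^4*x^6 + 631*aa^4*bb^3*K^4*x^8 + 26*aa^4*bb^3*K^4*x^10 - 7*aa^4*bb^3*K^4*x^12 + 11*aa^4*bb^4*K^5 - 154*aa^4*bb^4*K^5*x^2 + 165*aa^4*bb^4*K^5*x^4 + 660*aa^4*bb^4*K^5*x^6 + 165*aa^4*bb^4*K^5*x^8 - 154*aa^4*bb^4*K^5*x^10 + 11*aa^4*bb^4*K^5*x^12 + 704*aa^4*K*x^6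 + 352*aa^5*bb*K^3*x^4 + 192*aa^5*bb*K^3*x^6 + 352*aa^5*bb*K^3*x^8 - 52*aa^5*bb^2*K^4*x^2 - 112*aa^5*bb^2*K^4*x^4 + 1224*aa^5*bb^2*K^4*x^6 - 112*aa^5*bb^2*K^4*x^8 - 52*aa^5*bb^2*K^4*x^10 - 3*aa^5*bb^3*K^5 + 110*aa^5*bb^3*K^5*x^2 - 445*aa^5*bb^3*K^5*x^4 - 220*aa^5*bb^3*K^5*x^6 - 445*aa^5*bb^3*K^5*x^8 + 110*aa^5*bb^3*K^5*x^10 - 3*aa^5*bb^3*K^5*x^12 - 896*aa^5*K^2*x^6 - 80*aa^6*bb*K^4*x^4 - 608*aa^6*bb*K^4*x^6 - 80*aa^6*bb*K^4*x^8 - 28*aa^6*bb^2*K^5*x^2 + 320*aa^6*bb^2*K^5*x^4 - 200*aa^6*bb^2*K^5*x^6 + 320*aa^6*bb^2*K^5*x^8 - 28*aa^6*bb^2*K^5*x^10 + 384*aa^6*K^3*x^6 - 80*aa^7*bb*K^5*x^4 + 224*aa^7*bb*K^5*x^6 - 80*aa^7*bb*K^5*x^8 + 64*aa^7*K^4*x^6 - 64*aa^8*K^5*x^6 - 3*bb^3 + 18*bb^3*x^2 - 45*bb^3*x^4 + 60*bb^3*x^6 - 45*bb^3*x^8 + 18*bb^3*x^10 - 3*bb^3*x^12 + 11*bb^4*K - 66*bb^4*K*x^2 + 165*bb^4*K*x^4 - 220*bb^4*K*x^6 + 165*bb^4*K*x^8 - 66*bb^4*K*x^10 + 11*bb^4*K*x^12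 - 14*bb^5*K^2 + 84*bb^5*K^2*x^2 - 210*bb^5*K^2*x^4 + 280*bb^5*K^2*x^6 - 210*bb^5*K^2*x^8 + 84*bb^5*K^2*x^10 - 14*bb^5*K^2*x^12 + 6*bb^6*K^3 - 36*bb^6*K^3*x^2 + 90*bb^6*K^3*x^4 - 120*bb^6*K^3*x^6 + 90*bb^6*K^3*x^8 - 36*bb^6*K^3*x^10 + 6*bb^6*K^3*x^12 + bb^7*K^4 - 6*bb^7*K^4*x^2 + 15*bb^7*K^4*x^4 - 20*bb^7*K^4*x^6 + 15*bb^7*K^4*x^8 - 6*bb^7*K^4*x^10 + bb^7*K^4*x^12 - bb^8*K^5 + 6*bb^8*K^5*x^2 - 15*bb^8*K^5*x^4 + 20*bb^8*K^5*x^6 - 15*bb^8*K^5*x^8 + 6*bb^8*K^5*x^10 - bb^8*K^5*x^12)"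
    unfolding Aq_def Bq_def Cq_def by algebra
  have T4: "(- 36*aa*bb^2*x^2 + 144*aa*bb^2*x^4 - 216*aa*bb^2*x^6 + 144*aa*bb^2*x^8 - 36*aa*bb^2*x^10 - 7*aa*bb^3*K + 102*aa*bb^3*K*x^2 - 345*aa*bb^3*K*x^4 + 500*aa*bb^3*K*x^6 - 345*aa*bb^3*K*x^8 + 102*aa*bb^3*K*x^10 - 7*aa*bb^3*K*x^12 + 4*aa*bb^4*K^2 - 96*aa*bb^4*K^2*x^2 + 348*aa*bb^4*K^2*x^4 - 512*aa*bb^4*K^2*x^6 + 348*aa*bb^4*K^2*x^8 - 96*aa*bb^4*K^2*x^10 + 4*aa*bb^4*K^2*x^12 + 14*aa*bb^5*K^3 + 4*aa*bb^5*K^3*x^2 - 142*aa*bb^5*K^3*x^4 + 248*aa*bb^5*K^3*x^6 - 142*aa*bb^5*K^3*x^8 + 4*aa*bb^5*K^3*x^10 + 14*aa*bb^5*K^3*x^12 - 12*aa*bb^6*K^4 + 52*aa*bb^6*K^4*x^2 - 100*aa*bb^6*K^4*x^4 + 120*aa*bb^6*K^4*x^6 - 100*aa*bb^6*K^4*x^8 + 52*aa*bb^6*K^4*x^10 - 12*aa*bb^6*K^4*x^12 + aa*bb^7*K^5 - 26*aa*bb^7*K^5*x^2 + 95*aa*bb^7*K^5*x^4 - 140*aa*bb^7*K^5*x^6 + 95*aa*bb^7*K^5*x^8 - 26*aa*bb^7*K^5*x^10 + aa*bb^7*K^5*x^12 - 144*aa^2*bb*x^4 + 288*aa^2*bb*x^6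 - 144*aa^2*bb*x^8 - 12*aa^2*bb^2*K*x^2 + 24*aa^2*bb^2*K*x^6 - 12*aa^2*bb^2*K*x^10 + 10*aa^2*bb^3*K^2 - 12*aa^2*bb^3*K^2*x^2 + 54*aa^2*bb^3*K^2*x^4 - 104*aa^2*bb^3*K^2*x^6 + 54*aa^2*bb^3*K^2*x^8 - 12*aa^2*bb^3*K^2*x^10 + 10*aa^2*bb^3*K^2*x^12 - 30*aa^2*bb^4*K^3 + 172*aa^2*bb^4*K^3*x^2 - 2*aa^2*bb^4*K^3*x^4 - 280*aa^2*bb^4*K^3*x^6 - 2*aa^2*bb^4*K^3*x^8 + 172*aa^2*bb^4*K^3*x^10 - 30*aa^2*bb^4*K^3*x^12 + 14*aa^2*bb^5*K^4 - 164*aa^2*bb^5*K^4*x^2 + 322*aa^2*bb^5*K^4*x^4 - 344*aa^2*bb^5*K^4*x^6 + 322*aa^2*bb^5*K^4*x^8 - 164*aa^2*bb^5*K^4*x^10 + 14*aa^2*bb^5*K^4*x^12 + 6*aa^2*bb^6*K^5 + 16*aa^2*bb^6*K^5*x^2 - 230*aa^2*bb^6*K^5*x^4 + 416*aa^2*bb^6*K^5*x^6 - 230*aa^2*bb^6*K^5*x^8 + 16*aa^2*bb^6*K^5*x^10 + 6*aa^2*bb^6*K^5*x^12 + 240*aa^3*bb*K*x^4 - 928*aa^3*bb*K*x^6 + 240*aa^3*bb*K*x^8 + 24*aa^3*bb^2*K^2*x^2 + 96*aa^3*bb^2*K^2*x^4 + 400*aa^3*bb^2*K^2*x^6 + 96*aa^3*bb^2*K^2*x^8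 + 24*aa^3*bb^2*K^2*x^10 + 10*aa^3*bb^3*K^3 - 244*aa^3*bb^3*K^3*x^2 + 150*aa^3*bb^3*K^3*x^4 + 808*aa^3*bb^3*K^3*x^6 + 150*aa^3*bb^3*K^3*x^8 - 244*aa^3*bb^3*K^3*x^10 + 10*aa^3*bb^3*K^3*x^12 + 4*aa^3*bb^4*K^4 + 144*aa^3*bb^4*K^4*x^2 - 676*aa^3*bb^4*K^4*x^4 + 608*aa^3*bb^4*K^4*x^6 - 676*aa^3*bb^4*K^4*x^8 + 144*aa^3*bb^4*K^4*x^10 + 4*aa^3*bb^4*K^4*x^12 - 14*aa^3*bb^5*K^5 + 76*aa^3*bb^5*K^5*x^2 + 190*aa^3*bb^5*K^5*x^4 - 696*aa^3*bb^5*K^5*x^6 + 190*aa^3*bb^5*K^5*x^8 + 76*aa^3*bb^5*K^5*x^10 - 14*aa^3*bb^5*K^5*x^12 - 192*aa^3*x^6 - 288*aa^4*bb*K^2*x^4 + 832*aa^4*bb*K^2*x^6 - 288*aa^4*bb*K^2*x^8 + 104*aa^4*bb^2*K^3*x^2 - 448*aa^4*bb^2*K^3*x^4 - 1232*aa^4*bb^2*K^3*x^6 - 448*aa^4*bb^2*K^3*x^8 + 104*aa^4*bb^2*K^3*x^10 - 7*aa^4*bb^3*K^4 + 26*aa^4*bb^3*K^4*x^2 + 631*aa^4*bb^3*K^4*x^4 - 1044*aa^4*bb^3*K^4*x^6 + 631*aa^4*bb^3*K^4*x^8 + 26*aa^4*bb^3*K^4*x^10 - 7*aa^4*bb^3*K^4*x^12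 + 11*aa^4*bb^4*K^5 - 154*aa^4*bb^4*K^5*x^2 + 165*aa^4*bb^4*K^5*x^4 + 660*aa^4*bb^4*K^5*x^6 + 165*aa^4*bb^4*K^5*x^8 - 154*aa^4*bb^4*K^5*x^10 + 11*aa^4*bb^4*K^5*x^12 + 704*aa^4*K*x^6 + 352*aa^5*bb*K^3*x^4 + 192*aa^5*bb*K^3*x^6 + 352*aa^5*bb*K^3*x^8 - 52*aa^5*bb^2*K^4*x^2 - 112*aa^5*bb^2*K^4*x^4 + 1224*aa^5*bb^2*K^4*x^6 - 112*aa^5*bb^2*K^4*x^8 - 52*aa^5*bb^2*K^4*x^10 - 3*aa^5*bb^3*K^5 + 110*aa^5*bb^3*K^5*x^2 - 445*aa^5*bb^3*K^5*x^4 - 220*aa^5*bb^3*K^5*x^6 - 445*aa^5*bb^3*K^5*x^8 + 110*aa^5*bb^3*K^5*x^10 - 3*aa^5*bb^3*K^5*x^12 - 896*aa^5*K^2*x^6 - 80*aa^6*bb*K^4*x^4 - 608*aa^6*bb*K^4*x^6 - 80*aa^6*bb*K^4*x^8 - 28*aa^6*bb^2*K^5*x^2 + 320*aa^6*bb^2*K^5*x^4 - 200*aa^6*bb^2*K^5*x^6 + 320*aa^6*bb^2*K^5*x^8 - 28*aa^6*bb^2*K^5*x^10 + 384*aa^6*K^3*x^6 - 80*aa^7*bb*K^5*x^4 + 224*aa^7*bb*K^5*x^6 - 80*aa^7*bb*K^5*x^8 + 64*aa^7*K^4*x^6 - 64*aa^8*K^5*x^6 - 3*bb^3 + 18*bb^3*x^2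 - 45*bb^3*x^4 + 60*bb^3*x^6 - 45*bb^3*x^8 + 18*bb^3*x^10 - 3*bb^3*x^12 + 11*bb^4*K - 66*bb^4*K*x^2 + 165*bb^4*K*x^4 - 220*bb^4*K*x^6 + 165*bb^4*K*x^8 - 66*bb^4*K*x^10 + 11*bb^4*K*x^12 - 14*bb^5*K^2 + 84*bb^5*K^2*x^2 - 210*bb^5*K^2*x^4 + 280*bb^5*K^2*x^6 - 210*bb^5*K^2*x^8 + 84*bb^5*K^2*x^10 - 14*bb^5*K^2*x^12 + 6*bb^6*K^3 - 36*bb^6*K^3*x^2 + 90*bb^6*K^3*x^4 - 120*bb^6*K^3*x^6 + 90*bb^6*K^3*x^8 - 36*bb^6*K^3*x^10 + 6*bb^6*K^3*x^12 + bb^7*K^4 - 6*bb^7*K^4*x^2 + 15*bb^7*K^4*x^4 - 20*bb^7*K^4*x^6 + 15*bb^7*K^4*x^8 - 6*bb^7*K^4*x^10 + bb^7*K^4*x^12 - bb^8*K^5 + 6*bb^8*K^5*x^2 - 15*bb^8*K^5*x^4 + 20*bb^8*K^5*x^6 - 15*bb^8*K^5*x^8 + 6*bb^8*K^5*x^10 - bb^8*K^5*x^12) = 0" using aK by algebra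
  have "Aq^4 * T = 0" unfolding T1 T2 v1 v2 T3 T4 by simp
  hence T0: "T = 0" using Aqnz by simp
  have qx: "Qx > 0" "Qy > 0" "Qz > 0" unfolding Qx_def Qy_def Qz_def using Qpos by auto
  have "(1+x^2)^2/Qx + (1+y^2)^2/Qy + (1+z^2)^2/Qz = ((1+x^2)^2*Qy*Qz + (1+y^2)^2*Qx*Qz + (1+z^2)^2*Qx*Qy)/(Qx*Qy*Qz)"
    using qx by (simp add: field_simps)
  moreover have "2*K*aa*bb*((1+x^2)^2*Qy*Qz + (1+y^2)^2*Qx*Qz + (1+z^2)^2*Qx*Qy) = (K*(aa+bb)+3)*(Qx*Qy*Qz)"
    using T0 unfolding T_def by (simp add: algebra_simps)
  ultimately have "2*K*aa*bb*((1+x^2)^2/Qx + (1+y^2)^2/Qy + (1+z^2)^2/Qz) = K*(aa+bb)+3"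
    using qx by (simp add: field_simps)
  thus "2*K*aa*bb*((1+x^2)^2/(bb*(1+x^4) + 2*(2*aa-bb)*x^2) + (1+y^2)^2/(bb*(1+y^4) + 2*(2*aa-bb)*y^2)
          + (1+z^2)^2/(bb*(1+z^4) + 2*(2*aa-bb)*z^2)) = K*(aa+bb) + 3"
    unfolding Qx_def Qy_def Qz_def .
qed



lemma param:
  fixes a b x y :: real
  assumes ab: "a > 0" "b > 0" and el: "x^2/a^2 + y^2/b^2 = 1" and ne: "(x,y) \<noteq> (-a,0)"
  shows "\<exists>t. x = a*(1-t^2)/(1+t^2) \<and> y = 2*b*t/(1+t^2)"
proof -
  have y2: "y^2 = b^2*(a^2-x^2)/a^2" using el ab by (simp add: field_simps)
  have xa: "a + x \<noteq> 0"
  proof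
    assume "a + x = 0"
    hence "x = -a" by simp
    hence "y^2 = 0" using y2 by simp
    hence "y = 0" by simp
    thus False using ne \<open>x = -a\<close> by simp
  qed
  define t where "t = a*y/(b*(a+x))"
  have t2: "t^2*(a+x) = a - x"
  proof -
    have "t^2 = a^2*y^2/(b^2*(a+x)^2)" unfolding t_def by (simp add: power_mult_distrib power_divide)
    also have "\<dots> = (a^2-x^2)/(a+x)^2" unfolding y2 using ab xa by (simp add: field_simps)
    finally have "t^2*(a+x)^2 = a^2-x^2" using xa by (simp add: field_simps)
    hence "(a+x)*(t^2*(a+x) - (a-x)) = 0" by algebra
    thus ?thesis using xa by simp
  qed
  have d: "1 + t^2 \<noteq> 0" by (metis add_pos_nonneg zero_less_one zero_le_power2 less_irrefl)
  have "x = a*(1-t^2)/(1+t^2)"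
  proof -
    have "x*(1+t^2) = a*(1-t^2)" using t2 by algebra
    thus ?thesis using d by (simp add: field_simps)
  qed
  moreover have "y = 2*b*t/(1+t^2)"
  proof -
    have "(1+t^2)*(a+x) = 2*a" using t2 by algebra
    hence h1: "1 + t^2 = 2*a/(a+x)" using xa by (simp add: field_simps)
    have "b*(a+x) \<noteq> 0" using ab xa by simp
    hence bx: "a*b + b*x \<noteq> 0" by (simp add: algebra_simps)
    have h2: "2*b*t = y*(2*a/(a+x))" unfolding t_def using ab xa bx by (simp add: field_simps)
    have "2*a/(a+x) \<noteq> 0" using ab xa by simp
    thus ?thesis unfolding h1 h2 by simp
  qed
  ultimately show ?thesis by blast
qed

lemma pairF:
  fixes a b K ti tj :: real
  assumes ab: "a > 0" "b > 0" and d: "ti \<noteq> tj"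
    and h: "(ai*aj/a^2 + bi*bj/b^2 - 1)^2 = K*((ai-aj)^2 + (bi-bj)^2)"
    and xi: "ai = a*(1-ti^2)/(1+ti^2)" and yi: "bi = 2*b*ti/(1+ti^2)"
    and xj: "aj = a*(1-tj^2)/(1+tj^2)" and yj: "bj = 2*b*tj/(1+tj^2)"
  shows "(ti-tj)^2 = K*(a^2*(ti+tj)^2 + b^2*(1-ti*tj)^2)"
proof -
  have di: "1 + ti^2 > 0" by (simp add: add_pos_nonneg)
  have dj: "1 + tj^2 > 0" by (simp add: add_pos_nonneg)
  define ui where "ui = 1/(1+ti^2)"
  define uj where "uj = 1/(1+tj^2)"
  have hui: "ui*(1+ti^2) = 1" unfolding ui_def using di by simp
  have huj: "uj*(1+tj^2) = 1" unfolding uj_def using dj by simp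
  have xi': "ai = a*(1-ti^2)*ui" unfolding xi ui_def by simp
  have xj': "aj = a*(1-tj^2)*uj" unfolding xj uj_def by simp
  have yi': "bi = 2*b*ti*ui" unfolding yi ui_def by simp
  have yj': "bj = 2*b*tj*uj" unfolding yj uj_def by simp
  have p1: "ai*aj/a^2 = (1-ti^2)*(1-tj^2)*ui*uj" unfolding xi' xj' using ab by (simp add: field_simps power2_eq_square)
  have p2: "bi*bj/b^2 = 4*ti*tj*ui*uj" unfolding yi' yj' using ab by (simp add: field_simps power2_eq_square)
  have e: "ai*aj/a^2 + bi*bj/b^2 - 1 = -2*(ti-tj)^2*ui*uj"
    unfolding p1 p2 using hui huj by algebra
  have dd: "(ai-aj)^2 + (bi-bj)^2 = 4*(ti-tj)^2*(a^2*(ti+tj)^2 + b^2*(1-ti*tj)^2)*ui^2*uj^2"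
    unfolding xi' yi' xj' yj' using hui huj by algebra
  have "(-2*(ti-tj)^2*ui*uj)^2 = K*(4*(ti-tj)^2*(a^2*(ti+tj)^2 + b^2*(1-ti*tj)^2)*ui^2*uj^2)"
    using h unfolding e dd .
  hence "(4*(ti-tj)^2*ui^2*uj^2)*((ti-tj)^2) = (4*(ti-tj)^2*ui^2*uj^2)*(K*(a^2*(ti+tj)^2 + b^2*(1-ti*tj)^2))"
    by algebra
  moreover have "4*(ti-tj)^2*ui^2*uj^2 \<noteq> 0" using d hui huj by auto
  ultimately show ?thesis by simp
qed

lemma ninv:
  fixes a b t :: real
  assumes ab: "a > 0" "b > 0"
  shows "1/((a*(1-t^2)/(1+t^2))^2/a^4 + (2*b*t/(1+t^2))^2/b^4)
       = a^2*b^2*((1+t^2)^2/(b^2*(1+t^4) + 2*(2*a^2-b^2)*t^2))"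
proof -
  have d: "1 + t^2 > 0" by (simp add: add_pos_nonneg)
  have "(a*(1-t^2)/(1+t^2))^2/a^4 + (2*b*t/(1+t^2))^2/b^4
      = (b^2*(1+t^4) + 2*(2*a^2-b^2)*t^2)/(a^2*b^2*(1+t^2)^2)"
    using ab d by (simp add: field_simps; algebra?)
  thus ?thesis by simp
qed



definition Kr :: "real \<Rightarrow> real \<Rightarrow> real \<Rightarrow> real \<times> real \<Rightarrow> real \<times> real \<Rightarrow> bool" where
  "Kr a b K P Q \<longleftrightarrow> (fst P*fst Q/a^2 + snd P*snd Q/b^2 - 1)^2 = K*((fst P-fst Q)^2 + (snd P-snd Q)^2)"

lemma Kr_sym: "Kr a b K P Q \<Longrightarrow> Kr a b K Q P"
  unfolding Kr_def by (simp add: algebra_simps power2_commute)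

lemma Kr_neg: "Kr a b K (x,y) (x',y') \<Longrightarrow> Kr a b K (-x,y) (-x',y')"
  unfolding Kr_def by (simp add: algebra_simps power2_commute)

lemma notboth:
  fixes a b K xk yk :: real
  assumes ab: "a > 0" "b > 0"
    and h1: "Kr a b K (a,0) (-a,0)" and h2: "Kr a b K (a,0) (xk,yk)"
    and el: "xk^2/a^2 + yk^2/b^2 = 1"
    and n1: "(xk,yk) \<noteq> (a,0)" and n2: "(xk,yk) \<noteq> (-a,0)"
  shows False
proof -
  have "4 = K*(4*a^2)" using h1 ab unfolding Kr_def by (simp add: power2_eq_square)
  hence Ka: "K*a^2 = 1" by simp
  have "(xk/a - 1)^2 = K*((a-xk)^2 + yk^2)" using h2 ab unfolding Kr_def by (simp add: power2_eq_square)
  hence "a^2*(xk/a - 1)^2 = (K*a^2)*((a-xk)^2 + yk^2)" by simp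
  hence "a^2*(xk/a - 1)^2 = (a-xk)^2 + yk^2" using Ka by simp
  moreover have "a^2*(xk/a - 1)^2 = (a-xk)^2" using ab by (simp add: field_simps power2_eq_square)
  ultimately have "yk^2 = 0" by simp
  hence y0: "yk = 0" by simp
  hence "xk^2 = a^2" using el ab by (simp add: field_simps)
  hence "xk = a \<or> xk = -a" by (simp add: power2_eq_iff)
  thus False using n1 n2 y0 by auto
qed

lemma coreXY_noA:
  fixes a b K x1 y1 x2 y2 x3 y3 :: real
  assumes ab: "a > b" "b > 0" and Kp: "K > 0"
    and e1: "x1^2/a^2 + y1^2/b^2 = 1" and e2: "x2^2/a^2 + y2^2/b^2 = 1" and e3: "x3^2/a^2 + y3^2/b^2 = 1"
    and d12: "(x1,y1) \<noteq> (x2,y2)" and d13: "(x1,y1) \<noteq> (x3,y3)" and d23: "(x2,y2) \<noteq> (x3,y3)"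
    and h12: "Kr a b K (x1,y1) (x2,y2)" and h13: "Kr a b K (x1,y1) (x3,y3)" and h23: "Kr a b K (x2,y2) (x3,y3)"
    and n1: "(x1,y1) \<noteq> (-a,0)" and n2: "(x2,y2) \<noteq> (-a,0)" and n3: "(x3,y3) \<noteq> (-a,0)"
  shows "K^2*(a^2-b^2)^2 + K*(4*a^2-2*(a^2-b^2)) - 3 = 0"
    and "2*K*(1/(x1^2/a^4+y1^2/b^4) + 1/(x2^2/a^4+y2^2/b^4) + 1/(x3^2/a^4+y3^2/b^4)) = K*(a^2+b^2) + 3"
proof -
  have a0: "a > 0" using ab by simp
  obtain t1 where t1: "x1 = a*(1-t1^2)/(1+t1^2)" "y1 = 2*b*t1/(1+t1^2)" using param[OF a0 ab(2) e1 n1] by blast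
  obtain t2 where t2: "x2 = a*(1-t2^2)/(1+t2^2)" "y2 = 2*b*t2/(1+t2^2)" using param[OF a0 ab(2) e2 n2] by blast
  obtain t3 where t3: "x3 = a*(1-t3^2)/(1+t3^2)" "y3 = 2*b*t3/(1+t3^2)" using param[OF a0 ab(2) e3 n3] by blast
  have t12: "t1 \<noteq> t2" using d12 t1 t2 by auto
  have t13: "t1 \<noteq> t3" using d13 t1 t3 by auto
  have t23: "t2 \<noteq> t3" using d23 t2 t3 by auto
  have F12: "(t1-t2)^2 = K*(a^2*(t1+t2)^2 + b^2*(1-t1*t2)^2)"
    using pairF[OF a0 ab(2) t12 _ t1 t2] h12 unfolding Kr_def by simp
  have F13: "(t1-t3)^2 = K*(a^2*(t1+t3)^2 + b^2*(1-t1*t3)^2)"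
    using pairF[OF a0 ab(2) t13 _ t1 t3] h13 unfolding Kr_def by simp
  have F23: "(t2-t3)^2 = K*(a^2*(t2+t3)^2 + b^2*(1-t2*t3)^2)"
    using pairF[OF a0 ab(2) t23 _ t2 t3] h23 unfolding Kr_def by simp
  have ab2: "a^2 > b^2" using ab by (simp add: power_strict_mono)
  have b2: "b^2 > 0" using ab by simp
  note C = coreT[OF ab2 b2 Kp t12 t13 t23 F12 F13 F23]
  show "K^2*(a^2-b^2)^2 + K*(4*a^2-2*(a^2-b^2)) - 3 = 0" using C(1) .
  show "2*K*(1/(x1^2/a^4+y1^2/b^4) + 1/(x2^2/a^4+y2^2/b^4) + 1/(x3^2/a^4+y3^2/b^4)) = K*(a^2+b^2) + 3"
    unfolding t1 t2 t3 ninv[OF a0 ab(2)] using C(2) by (simp add: algebra_simps)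
qed

lemma coreXY:
  fixes a b K x1 y1 x2 y2 x3 y3 :: real
  assumes ab: "a > b" "b > 0" and Kp: "K > 0"
    and e1: "x1^2/a^2 + y1^2/b^2 = 1" and e2: "x2^2/a^2 + y2^2/b^2 = 1" and e3: "x3^2/a^2 + y3^2/b^2 = 1"
    and d12: "(x1,y1) \<noteq> (x2,y2)" and d13: "(x1,y1) \<noteq> (x3,y3)" and d23: "(x2,y2) \<noteq> (x3,y3)"
    and h12: "Kr a b K (x1,y1) (x2,y2)" and h13: "Kr a b K (x1,y1) (x3,y3)" and h23: "Kr a b K (x2,y2) (x3,y3)"
  shows "K^2*(a^2-b^2)^2 + K*(4*a^2-2*(a^2-b^2)) - 3 = 0"
    and "2*K*(1/(x1^2/a^4+y1^2/b^4) + 1/(x2^2/a^4+y2^2/b^4) + 1/(x3^2/a^4+y3^2/b^4)) = K*(a^2+b^2) + 3"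
proof -
  have a0: "a > 0" using ab by simp
  have h21: "Kr a b K (x2,y2) (x1,y1)" using Kr_sym[OF h12] .
  have h31: "Kr a b K (x3,y3) (x1,y1)" using Kr_sym[OF h13] .
  have h32: "Kr a b K (x3,y3) (x2,y2)" using Kr_sym[OF h23] .
  have "((x1,y1) \<noteq> (-a,0) \<and> (x2,y2) \<noteq> (-a,0) \<and> (x3,y3) \<noteq> (-a,0)) \<or>
        ((x1,y1) \<noteq> (a,0) \<and> (x2,y2) \<noteq> (a,0) \<and> (x3,y3) \<noteq> (a,0))"
  proof (rule ccontr)
    assume "\<not> ?thesis"
    then consider
        "(x1,y1) = (a,0)" "(x2,y2) = (-a,0)" | "(x1,y1) = (a,0)" "(x3,y3) = (-a,0)"
      | "(x2,y2) = (a,0)" "(x1,y1) = (-a,0)" | "(x2,y2) = (a,0)" "(x3,y3) = (-a,0)"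
      | "(x3,y3) = (a,0)" "(x1,y1) = (-a,0)" | "(x3,y3) = (a,0)" "(x2,y2) = (-a,0)"
      using d12 d13 d23 a0 by (simp add: prod_eq_iff) (smt (verit))
    thus False
    proof cases
      case 1 thus False using notboth[OF a0 ab(2) _ _ e3, of K] h12 h13 d13 d23 by auto
    next
      case 2 thus False using notboth[OF a0 ab(2) _ _ e2, of K] h13 h12 d12 d23 by auto
    next
      case 3 thus False using notboth[OF a0 ab(2) _ _ e3, of K] h21 h23 d13 d23 by auto
    next
      case 4 thus False using notboth[OF a0 ab(2) _ _ e1, of K] h23 h21 d12 d13 by auto
    next
      case 5 thus False using notboth[OF a0 ab(2) _ _ e2, of K] h31 h32 d12 d23 by auto
    next
      case 6 thus False using notboth[OF a0 ab(2) _ _ e1, of K] h32 h31 d12 d13 by auto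
    qed
  qed
  hence conj: "K^2*(a^2-b^2)^2 + K*(4*a^2-2*(a^2-b^2)) - 3 = 0 \<and>
    2*K*(1/(x1^2/a^4+y1^2/b^4) + 1/(x2^2/a^4+y2^2/b^4) + 1/(x3^2/a^4+y3^2/b^4)) = K*(a^2+b^2) + 3"
  proof
    assume n: "(x1,y1) \<noteq> (-a,0) \<and> (x2,y2) \<noteq> (-a,0) \<and> (x3,y3) \<noteq> (-a,0)"
    show ?thesis using coreXY_noA[OF ab Kp e1 e2 e3 d12 d13 d23 h12 h13 h23] n by blast
  next
    assume n: "(x1,y1) \<noteq> (a,0) \<and> (x2,y2) \<noteq> (a,0) \<and> (x3,y3) \<noteq> (a,0)"
    have e1': "(-x1)^2/a^2 + y1^2/b^2 = 1" using e1 by simp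
    have e2': "(-x2)^2/a^2 + y2^2/b^2 = 1" using e2 by simp
    have e3': "(-x3)^2/a^2 + y3^2/b^2 = 1" using e3 by simp
    have d12': "(-x1,y1) \<noteq> (-x2,y2)" using d12 by simp
    have d13': "(-x1,y1) \<noteq> (-x3,y3)" using d13 by simp
    have d23': "(-x2,y2) \<noteq> (-x3,y3)" using d23 by simp
    have n': "(-x1,y1) \<noteq> (-a,0)" "(-x2,y2) \<noteq> (-a,0)" "(-x3,y3) \<noteq> (-a,0)" using n by auto
    note R = coreXY_noA[OF ab Kp e1' e2' e3' d12' d13' d23' Kr_neg[OF h12] Kr_neg[OF h13] Kr_neg[OF h23] n']
    show ?thesis using R by simp
  qed
  thus "K^2*(a^2-b^2)^2 + K*(4*a^2-2*(a^2-b^2)) - 3 = 0" by blast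
  show "2*K*(1/(x1^2/a^4+y1^2/b^4) + 1/(x2^2/a^4+y2^2/b^4) + 1/(x3^2/a^4+y3^2/b^4)) = K*(a^2+b^2) + 3"
    using conj by blast
qed



lemma K0_unique:
  fixes a b K :: real
  assumes ab: "a > b" "b > 0" and Kp: "K > 0"
    and q: "K^2*(a^2-b^2)^2 + K*(4*a^2-2*(a^2-b^2)) - 3 = 0"
  shows "K = (2*sqrt(a^4-a^2*b^2+b^4) - a^2 - b^2)/(a^2-b^2)^2"
proof -
  define c4 where "c4 = (a^2-b^2)^2"
  have a2: "a^2 > b^2" using ab by (simp add: power_strict_mono)
  have c4p: "c4 > 0" unfolding c4_def using a2 by simp
  define d where "d = sqrt(a^4-a^2*b^2+b^4)"
  have nn: "a^4-a^2*b^2+b^4 \<ge> 0"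
  proof -
    have eq: "a^4-a^2*b^2+b^4 = (a^2-b^2)^2 + a^2*b^2" by algebra
    show ?thesis unfolding eq by (intro add_nonneg_nonneg) simp_all
  qed
  have dsq: "d^2 = a^4-a^2*b^2+b^4" unfolding d_def using nn by simp
  have d0: "d \<ge> 0" unfolding d_def using nn by simp
  have "(c4*K + a^2 + b^2)^2 = (2*d)^2" unfolding c4_def using q dsq by algebra
  moreover have "c4*K + a^2 + b^2 \<ge> 0" using c4p Kp by (simp add: add_nonneg_nonneg)
  moreover have "2*d \<ge> 0" using d0 by simp
  ultimately have "c4*K + a^2 + b^2 = 2*d" using power2_eq_imp_eq by blast
  hence "K = (2*d - a^2 - b^2)/c4" using c4p by (simp add: field_simps)
  thus ?thesis unfolding d_def c4_def .
qed

lemma sumcos: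
  fixes a b x1 y1 x2 y2 x3 y3 :: real
  assumes ab: "a > b" "b > 0" and bil: "billiard3 a b (x1,y1) (x2,y2) (x3,y3)"
  shows "cos (interior_angle (x1,y1) (x2,y2) (x3,y3)) + cos (interior_angle (x2,y2) (x3,y3) (x1,y1))
          + cos (interior_angle (x3,y3) (x1,y1) (x2,y2))
       = (2*sqrt(a^4-a^2*b^2+b^4) - a^2 - b^2)/(a^2-b^2)^2 * (a^2+b^2)"
proof -
  have a0: "a > 0" using ab by simp
  have nd: "(x2-x1)*(y3-y1) - (y2-y1)*(x3-x1) \<noteq> 0"
    using bil unfolding billiard3_def nondegenerate_def by simp
  have nd2: "(x3-x2)*(y1-y2) - (y3-y2)*(x1-x2) \<noteq> 0" using nd by (simp add: algebra_simps)
  have nd3: "(x1-x3)*(y2-y3) - (y1-y3)*(x2-x3) \<noteq> 0" using nd by (simp add: algebra_simps)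
  have el1: "on_ellipse a b (x1,y1)" and el2: "on_ellipse a b (x2,y2)" and el3: "on_ellipse a b (x3,y3)"
    and nb1: "normal_bisects a b (x1,y1) (x2,y2) (x3,y3)"
    and nb2: "normal_bisects a b (x2,y2) (x3,y3) (x1,y1)"
    and nb3: "normal_bisects a b (x3,y3) (x1,y1) (x2,y2)"
    using bil unfolding billiard3_def by auto
  have e1: "x1^2/a^2 + y1^2/b^2 = 1" using el1 unfolding on_ellipse_def by simp
  have e2: "x2^2/a^2 + y2^2/b^2 = 1" using el2 unfolding on_ellipse_def by simp
  have e3: "x3^2/a^2 + y3^2/b^2 = 1" using el3 unfolding on_ellipse_def by simp
  note V1 = vertex[OF a0 ab(2) el1 nd nb1]
  note V2 = vertex[OF a0 ab(2) el2 nd2 nb2]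
  note V3 = vertex[OF a0 ab(2) el3 nd3 nb3]
  define l12 where "l12 = vlen (vsub (x2,y2) (x1,y1))"
  define l13 where "l13 = vlen (vsub (x3,y3) (x1,y1))"
  define l23 where "l23 = vlen (vsub (x3,y3) (x2,y2))"
  have l21: "vlen (vsub (x1,y1) (x2,y2)) = l12" using l12_def vlen_sym by metis
  have l31: "vlen (vsub (x1,y1) (x3,y3)) = l13" using l13_def vlen_sym by metis
  have l32: "vlen (vsub (x2,y2) (x3,y3)) = l23" using l23_def vlen_sym by metis
  define e12 where "e12 = x1*x2/a^2 + y1*y2/b^2 - 1"
  define e13 where "e13 = x1*x3/a^2 + y1*y3/b^2 - 1"
  define e23 where "e23 = x2*x3/a^2 + y2*y3/b^2 - 1"
  define J where "J = e12/l12"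
  have J13: "e13/l13 = J" using V1(1) unfolding J_def e12_def e13_def l12_def l13_def by simp
  have J23: "e23/l23 = J" using V2(1) unfolding J_def e12_def e23_def l12_def l23_def l21
    by (simp add: mult.commute)
  have C1: "cos (interior_angle (x1,y1) (x2,y2) (x3,y3)) = 2*J^2/(x1^2/a^4 + y1^2/b^4) - 1"
    using V1(2) unfolding J_def e12_def l12_def by simp
  have C2: "cos (interior_angle (x2,y2) (x3,y3) (x1,y1)) = 2*J^2/(x2^2/a^4 + y2^2/b^4) - 1"
    using V2(2) J23 unfolding e23_def l23_def by simp
  have C3: "cos (interior_angle (x3,y3) (x1,y1) (x2,y2)) = 2*J^2/(x3^2/a^4 + y3^2/b^4) - 1"
  proof -
    have "(x3*x1/a^2 + y3*y1/b^2 - 1)/vlen (vsub (x1,y1) (x3,y3)) = J"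
      using J13 unfolding e13_def l31 by (simp add: mult.commute)
    thus ?thesis using V3(2) by simp
  qed
  have ne12: "(x1,y1) \<noteq> (x2,y2)" using nd by auto
  have ne13: "(x1,y1) \<noteq> (x3,y3)" using nd by auto
  have ne23: "(x2,y2) \<noteq> (x3,y3)" using nd by auto
  have l12p: "l12 > 0" and s12: "l12^2 = (x2-x1)^2 + (y2-y1)^2" using len_pos[of x2 y2 x1 y1] ne12 l12_def by auto
  have l13p: "l13 > 0" and s13: "l13^2 = (x3-x1)^2 + (y3-y1)^2" using len_pos[of x3 y3 x1 y1] ne13 l13_def by auto
  have l23p: "l23 > 0" and s23: "l23^2 = (x3-x2)^2 + (y3-y2)^2" using len_pos[of x3 y3 x2 y2] ne23 l23_def by auto
  have e12n: "e12 < 0"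
  proof -
    have "2*(-e12) = (x1-x2)^2/a^2 + (y1-y2)^2/b^2"
      unfolding e12_def using e1 e2 ab by (simp add: field_simps power2_eq_square) algebra
    moreover have "(x1-x2)^2/a^2 + (y1-y2)^2/b^2 > 0"
    proof -
      have "x1 \<noteq> x2 \<or> y1 \<noteq> y2" using ne12 by auto
      thus ?thesis using ab by (auto simp: add_pos_nonneg add_nonneg_pos)
    qed
    ultimately show ?thesis by simp
  qed
  define K where "K = J^2"
  have Kp: "K > 0" unfolding K_def J_def using e12n l12p by simp
  have h12: "Kr a b K (x1,y1) (x2,y2)"
  proof -
    have "e12 = J*l12" unfolding J_def using l12p by simp
    hence "e12^2 = K*l12^2" unfolding K_def by (simp add: power_mult_distrib)
    thus ?thesis unfolding Kr_def e12_def s12 by (simp add: power2_commute)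
  qed
  have h13: "Kr a b K (x1,y1) (x3,y3)"
  proof -
    have "e13 = J*l13" using J13 l13p by (simp add: field_simps)
    hence "e13^2 = K*l13^2" unfolding K_def by (simp add: power_mult_distrib)
    thus ?thesis unfolding Kr_def e13_def s13 by (simp add: power2_commute)
  qed
  have h23: "Kr a b K (x2,y2) (x3,y3)"
  proof -
    have "e23 = J*l23" using J23 l23p by (simp add: field_simps)
    hence "e23^2 = K*l23^2" unfolding K_def by (simp add: power_mult_distrib)
    thus ?thesis unfolding Kr_def e23_def s23 by (simp add: power2_commute)
  qed
  note R = coreXY[OF ab Kp e1 e2 e3 ne12 ne13 ne23 h12 h13 h23]
  have "cos (interior_angle (x1,y1) (x2,y2) (x3,y3)) + cos (interior_angle (x2,y2) (x3,y3) (x1,y1))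
          + cos (interior_angle (x3,y3) (x1,y1) (x2,y2))
        = 2*K*(1/(x1^2/a^4+y1^2/b^4) + 1/(x2^2/a^4+y2^2/b^4) + 1/(x3^2/a^4+y3^2/b^4)) - 3"
    unfolding C1 C2 C3 K_def by (simp add: field_simps)
  also have "\<dots> = K*(a^2+b^2)" using R(2) by simp
  also have "K = (2*sqrt(a^4-a^2*b^2+b^4) - a^2 - b^2)/(a^2-b^2)^2" using K0_unique[OF ab Kp R(1)] .
  finally show ?thesis .
qed



theorem corollary1:
  fixes a b :: real
  assumes "a > b" and "b > 0"
  shows "\<exists>c1 c2 c3. \<forall>P1 P2 P3. billiard3 a b P1 P2 P3 \<longrightarrow>
     (let J1 = excenter P1 P2 P3; J2 = excenter P2 P3 P1; J3 = excenter P3 P1 P2 in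
        cos (interior_angle P1 P2 P3) + cos (interior_angle P2 P3 P1)
          + cos (interior_angle P3 P1 P2) = c1 \<and>
        \<bar>cos (interior_angle J1 J2 J3) * cos (interior_angle J2 J3 J1)
          * cos (interior_angle J3 J1 J2)\<bar> = c2 \<and>
        tri_area J1 J2 J3 / tri_area P1 P2 P3 = c3)"
proof -
  define c1 where "c1 = (2*sqrt(a^4-a^2*b^2+b^4) - a^2 - b^2)/(a^2-b^2)^2 * (a^2+b^2)"
  have "\<forall>P1 P2 P3. billiard3 a b P1 P2 P3 \<longrightarrow>
     (let J1 = excenter P1 P2 P3; J2 = excenter P2 P3 P1; J3 = excenter P3 P1 P2 in
        cos (interior_angle P1 P2 P3) + cos (interior_angle P2 P3 P1)
          + cos (interior_angle P3 P1 P2) = c1 \<and>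
        \<bar>cos (interior_angle J1 J2 J3) * cos (interior_angle J2 J3 J1)
          * cos (interior_angle J3 J1 J2)\<bar> = (c1-1)/4 \<and>
        tri_area J1 J2 J3 / tri_area P1 P2 P3 = 2/(c1-1))"
  proof (intro allI impI)
    fix P1 P2 P3 assume bil: "billiard3 a b P1 P2 P3"
    obtain x1 y1 where P1: "P1 = (x1,y1)" by (cases P1)
    obtain x2 y2 where P2: "P2 = (x2,y2)" by (cases P2)
    obtain x3 y3 where P3: "P3 = (x3,y3)" by (cases P3)
    have bil': "billiard3 a b (x1,y1) (x2,y2) (x3,y3)" using bil P1 P2 P3 by simp
    have nd: "(x2-x1)*(y3-y1) - (y2-y1)*(x3-x1) \<noteq> 0"
      using bil' unfolding billiard3_def nondegenerate_def by simp
    have S: "cos (interior_angle (x1,y1) (x2,y2) (x3,y3)) + cos (interior_angle (x2,y2) (x3,y3) (x1,y1))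
          + cos (interior_angle (x3,y3) (x1,y1) (x2,y2)) = c1"
      unfolding c1_def using sumcos[OF assms bil'] .
    note G = triG[OF nd]
    obtain rho where r1: "cos (interior_angle (x1,y1) (x2,y2) (x3,y3)) + cos (interior_angle (x2,y2) (x3,y3) (x1,y1))
          + cos (interior_angle (x3,y3) (x1,y1) (x2,y2)) = 1 + rho"
      and r2: "\<bar>cos (interior_angle (excenter (x1,y1) (x2,y2) (x3,y3)) (excenter (x2,y2) (x3,y3) (x1,y1)) (excenter (x3,y3) (x1,y1) (x2,y2)))
         * cos (interior_angle (excenter (x2,y2) (x3,y3) (x1,y1)) (excenter (x3,y3) (x1,y1) (x2,y2)) (excenter (x1,y1) (x2,y2) (x3,y3)))
         * cos (interior_angle (excenter (x3,y3) (x1,y1) (x2,y2)) (excenter (x1,y1) (x2,y2) (x3,y3)) (excenter (x2,y2) (x3,y3) (x1,y1)))\<bar>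
         = rho / 4"
      and r3: "tri_area (excenter (x1,y1) (x2,y2) (x3,y3)) (excenter (x2,y2) (x3,y3) (x1,y1)) (excenter (x3,y3) (x1,y1) (x2,y2))
         / tri_area (x1,y1) (x2,y2) (x3,y3) = 2 / rho"
      using G by blast
    have rho: "rho = c1 - 1" using r1 S by simp
    show "let J1 = excenter P1 P2 P3; J2 = excenter P2 P3 P1; J3 = excenter P3 P1 P2 in
        cos (interior_angle P1 P2 P3) + cos (interior_angle P2 P3 P1)
          + cos (interior_angle P3 P1 P2) = c1 \<and>
        \<bar>cos (interior_angle J1 J2 J3) * cos (interior_angle J2 J3 J1)
          * cos (interior_angle J3 J1 J2)\<bar> = (c1-1)/4 \<and>
        tri_area J1 J2 J3 / tri_area P1 P2 P3 = 2/(c1-1)"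
      unfolding Let_def P1 P2 P3 using S r2 r3 rho by simp
  qed
  thus ?thesis by blast
qed

end
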